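(* Let $f$ be a Lebesgue measurable function on $(0,\infty)$ such that the set $\{x\in(0,\infty):f(x)\neq0\}$ has positive Lebesgue measure. Then $\mathbf J_{\mathscr W_{p',1/v_1}}(f)=\infty$. In particular the strong associate space of $\mathscr W_{p',1/v_1}$ is $\{0\}$.
   Context: Let $1<p<\infty$, $p'=p/(p-1)$. For $1\le r<\infty$, $\mathscr V_r(0,\infty)$ is the set of $v\in L^r_{\rm loc}(0,\infty)$, $v\ge0$, $\|v\|_{L^1(0,\infty)}\ne0$. Let $v_0,v_1\in\mathscr V_p(0,\infty)$ with $1/v_1\in L^{p'}_{\rm loc}(0,\infty)$, and assume there is $c\in(0,\infty)$ with $\|v_1^{-1}\|_{L^{p'}(0,c)}\|v_0\|_{L^p(0,c)}=\|v_1^{-1}\|_{L^{p'}(c,\infty)}\|v_0\|_{L^p(c,\infty)}=\infty$. Then there exist unique strictly increasing absolutely continuous functions $a,b$ on $(0,\infty)$ with $a(t),b(t)\to0$ as $t\to0$, $a(t),b(t)\to\infty$ as $t\to\infty$, $a(t)<t<b(t)$, $\int_{a(t)}^t v_1^{-p'}=\int_t^{b(t)}v_1^{-p'}$ and $\bigl(\int_{a(t)}^{b(t)}v_1^{-p'}\bigr)^{1/p'}\bigl(\int_{a(t)}^{b(t)}v_0^{p}\bigr)^{1/p}=1$ for all $t>0$; $a^{-1}$ is the inverse of $a$, $V_1(t):=\int_{a(t)}^{b(t)}v_1^{-p'}$. For $g\in L^1_{\rm loc}(0,\infty)$: $\mathbb G(g)=\Bigl(\int_0^\infty v_1^{-p'}(t)\Bigl|\int_t^{a^{-1}(t)}\frac{g(x)}{V_1(x)}\bigl(\int_{a(x)}^t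 v_1^{-p'}\bigr)dx\Bigr|^{p'}dt\Bigr)^{1/p'}$, $\mathcal G(g)=\Bigl(\int_0^\infty v_1^{-p'}(t)V_1^{p'}(t)\Bigl|\int_t^{a^{-1}(t)}\frac{g(x)}{V_1(x)}dx\Bigr|^{p'}dt\Bigr)^{1/p'}$; $\mathscr W_{p',1/v_1}=\{g\in L^1_{\rm loc}(0,\infty):\|g\|_{\mathscr W_{p',1/v_1}}:=\mathbb G(g)+\mathcal G(g)<\infty\}$. For measurable $f$, $\mathbf J_{\mathscr W_{p',1/v_1}}(f):=\sup_{0\ne g\in\mathscr W_{p',1/v_1}}\frac{\int_0^\infty|fg|}{\|g\|_{\mathscr W_{p',1/v_1}}}\in[0,\infty]$, and the strong associate space is $\{f:\mathbf J_{\mathscr W_{p',1/v_1}}(f)<\infty\}$. *)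

theory Defs
  imports "HOL-Analysis.Analysis"
begin

definition conj_exp :: "real \<Rightarrow> real" where
  "conj_exp p = p / (p - 1)"

definition epow :: "ennreal \<Rightarrow> real \<Rightarrow> ennreal" where
  "epow I s = (if I = \<infinity> then \<infinity> else ennreal (enn2real I powr s))"

definition Lnorm :: "real \<Rightarrow> real set \<Rightarrow> (real \<Rightarrow> real) \<Rightarrow> ennreal" where
  "Lnorm r A v = epow (\<integral>\<^sup>+ x\<in>A. ennreal (\<bar>v x\<bar> powr r) \<partial>lebesgue) (1 / r)"

definition Lloc :: "real \<Rightarrow> (real \<Rightarrow> real) \<Rightarrow> bool" where
  "Lloc r v \<longleftrightarrow> v \<in> borel_measurable (lebesgue_on {0<..}) \<and>
     (\<forall>\<alpha> \<beta>. 0 < \<alpha> \<longrightarrow> \<alpha> \<le> \<beta> \<longrightarrow>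
        (\<integral>\<^sup>+ x\<in>{\<alpha>..\<beta>}. ennreal (\<bar>v x\<bar> powr r) \<partial>lebesgue) < \<infinity>)"

definition weight_class :: "real \<Rightarrow> (real \<Rightarrow> real) \<Rightarrow> bool" where
  "weight_class r v \<longleftrightarrow> Lloc r v \<and> (\<forall>x>0. 0 \<le> v x) \<and>
     (\<integral>\<^sup>+ x\<in>{0<..}. ennreal \<bar>v x\<bar> \<partial>lebesgue) \<noteq> 0"

definition loc_abs_cont_pos :: "(real \<Rightarrow> real) \<Rightarrow> bool" where
  "loc_abs_cont_pos f \<longleftrightarrow>
    (\<forall>\<alpha> \<beta>. 0 < \<alpha> \<longrightarrow> \<alpha> \<le> \<beta> \<longrightarrow>
      (\<forall>\<epsilon>>0. \<exists>\<delta>>0. \<forall>(n::nat) (c::nat \<Rightarrow> real) d.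
         (\<forall>i<n. \<alpha> \<le> c i \<and> c i \<le> d i \<and> d i \<le> \<beta>) \<and>
         (\<forall>i<n. \<forall>j<n. i \<noteq> j \<longrightarrow> d i \<le> c j \<or> d j \<le> c i) \<and>
         (\<Sum>i<n. d i - c i) < \<delta> \<longrightarrow>
         (\<Sum>i<n. \<bar>f (d i) - f (c i)\<bar>) < \<epsilon>))"

definition wt :: "real \<Rightarrow> (real \<Rightarrow> real) \<Rightarrow> real \<Rightarrow> real" where
  "wt p v1 x = (1 / v1 x) powr conj_exp p"

definition V1 :: "real \<Rightarrow> (real \<Rightarrow> real) \<Rightarrow> (real \<Rightarrow> real) \<Rightarrow> (real \<Rightarrow> real) \<Rightarrow> real \<Rightarrow> real" where
  "V1 p v1 a b t = (LINT x:{a t..b t}|lebesgue. wt p v1 x)"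

definition GG :: "real \<Rightarrow> (real \<Rightarrow> real) \<Rightarrow> (real \<Rightarrow> real) \<Rightarrow> (real \<Rightarrow> real)
                  \<Rightarrow> (real \<Rightarrow> real) \<Rightarrow> ennreal" where
  "GG p v1 a b g = epow
     (\<integral>\<^sup>+ t\<in>{0<..}. ennreal (wt p v1 t *
        \<bar>LINT x:{t..inv_into {0<..} a t}|lebesgue.
            g x / V1 p v1 a b x * (LINT y:{a x..t}|lebesgue. wt p v1 y)\<bar> powr conj_exp p)
      \<partial>lebesgue) (1 / conj_exp p)"

definition CG :: "real \<Rightarrow> (real \<Rightarrow> real) \<Rightarrow> (real \<Rightarrow> real) \<Rightarrow> (real \<Rightarrow> real)
                  \<Rightarrow> (real \<Rightarrow> real) \<Rightarrow> ennreal" where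
  "CG p v1 a b g = epow
     (\<integral>\<^sup>+ t\<in>{0<..}. ennreal (wt p v1 t * V1 p v1 a b t powr conj_exp p *
        \<bar>LINT x:{t..inv_into {0<..} a t}|lebesgue. g x / V1 p v1 a b x\<bar> powr conj_exp p)
      \<partial>lebesgue) (1 / conj_exp p)"

definition Wnorm :: "real \<Rightarrow> (real \<Rightarrow> real) \<Rightarrow> (real \<Rightarrow> real) \<Rightarrow> (real \<Rightarrow> real)
                  \<Rightarrow> (real \<Rightarrow> real) \<Rightarrow> ennreal" where
  "Wnorm p v1 a b g = GG p v1 a b g + CG p v1 a b g"

definition Wspace :: "real \<Rightarrow> (real \<Rightarrow> real) \<Rightarrow> (real \<Rightarrow> real) \<Rightarrow> (real \<Rightarrow> real)
                  \<Rightarrow> (real \<Rightarrow> real) set" where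
  "Wspace p v1 a b = {g. Lloc 1 g \<and> Wnorm p v1 a b g < \<infinity>}"

definition JW :: "real \<Rightarrow> (real \<Rightarrow> real) \<Rightarrow> (real \<Rightarrow> real) \<Rightarrow> (real \<Rightarrow> real)
                  \<Rightarrow> (real \<Rightarrow> real) \<Rightarrow> ennreal" where
  "JW p v1 a b f = (SUP g \<in> {g \<in> Wspace p v1 a b. \<not> (AE x in lebesgue_on {0<..}. g x = 0)}.
      (\<integral>\<^sup>+ x\<in>{0<..}. ennreal \<bar>f x * g x\<bar> \<partial>lebesgue) / Wnorm p v1 a b g)"

definition strong_assoc :: "real \<Rightarrow> (real \<Rightarrow> real) \<Rightarrow> (real \<Rightarrow> real) \<Rightarrow> (real \<Rightarrow> real)
                  \<Rightarrow> (real \<Rightarrow> real) set" where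
  "strong_assoc p v1 a b = {f \<in> borel_measurable (lebesgue_on {0<..}). JW p v1 a b f < \<infinity>}"

end

theory Submission
  imports Defs
begin

lemma lac_isCont:
  assumes "loc_abs_cont_pos f" "0 < x"
  shows "isCont f x"
proof (rule continuous_at_eps_delta[THEN iffD2], intro allI impI)
  fix e :: real assume e: "0 < e"
  from assms(1) have "\<exists>\<delta>>0. \<forall>(n::nat) (c::nat \<Rightarrow> real) d.
         (\<forall>i<n. x/2 \<le> c i \<and> c i \<le> d i \<and> d i \<le> 2*x) \<and>
         (\<forall>i<n. \<forall>j<n. i \<noteq> j \<longrightarrow> d i \<le> c j \<or> d j \<le> c i) \<and>
         (\<Sum>i<n. d i - c i) < \<delta> \<longrightarrow>
         (\<Sum>i<n. \<bar>f (d i) - f (c i)\<bar>) < e"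
  proof -
    have "0 < x/2" "x/2 \<le> 2*x" using assms(2) by auto
    then show ?thesis using assms(1) e unfolding loc_abs_cont_pos_def by blast
  qed
  then obtain d where d: "d > 0" and H: "\<And>(n::nat) (c::nat \<Rightarrow> real) dd.
         (\<forall>i<n. x/2 \<le> c i \<and> c i \<le> dd i \<and> dd i \<le> 2*x) \<and>
         (\<forall>i<n. \<forall>j<n. i \<noteq> j \<longrightarrow> dd i \<le> c j \<or> dd j \<le> c i) \<and>
         (\<Sum>i<n. dd i - c i) < d \<Longrightarrow>
         (\<Sum>i<n. \<bar>f (dd i) - f (c i)\<bar>) < e" by blast
  show "\<exists>d>0. \<forall>y. dist y x < d \<longrightarrow> dist (f y) (f x) < e"
  proof (intro exI[of _ "min d (x/2)"] conjI allI impI)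
    show "0 < min d (x/2)" using d assms(2) by simp
    fix y assume y: "dist y x < min d (x/2)"
    have "(\<Sum>i<(1::nat). \<bar>f ((\<lambda>_. max x y) i) - f ((\<lambda>_. min x y) i)\<bar>) < e"
      apply (rule H)
      using y assms(2) by (auto simp: dist_real_def abs_if split: if_splits)
    then show "dist (f y) (f x) < e" by (auto simp: dist_real_def max_def min_def abs_minus_commute split: if_splits)
  qed
qed

lemma lac_cont:
  assumes "loc_abs_cont_pos f" shows "continuous_on {0<..} f"
  using lac_isCont[OF assms] by (intro continuous_at_imp_continuous_on) auto

lemma smo_le_iff:
  assumes "strict_mono_on {0<..} (a::real\<Rightarrow>real)" "0 < x" "0 < y"
  shows "a x \<le> a y \<longleftrightarrow> x \<le> y"
  using assms unfolding strict_mono_on_def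
  by (metis greaterThan_iff linorder_not_le order_le_less)

lemma smo_less_iff:
  assumes "strict_mono_on {0<..} (a::real\<Rightarrow>real)" "0 < x" "0 < y"
  shows "a x < a y \<longleftrightarrow> x < y"
  using smo_le_iff[OF assms(1) assms(3) assms(2)] by linarith

lemma a_pos:
  assumes "strict_mono_on {0<..} (a::real\<Rightarrow>real)" "(a \<longlongrightarrow> 0) (at_right 0)" "0 < x"
  shows "0 < a x"
proof -
  have ev: "eventually (\<lambda>y. a y \<le> a (x/2)) (at_right 0)"
    unfolding eventually_at_right_field
    using assms(3) by (intro exI[of _ "x/2"]) (auto simp: smo_le_iff[OF assms(1)])
  have "0 \<le> a (x/2)"
    by (rule tendsto_upperbound[OF assms(2) ev]) simp
  moreover have "a (x/2) < a x" using assms(3) by (simp add: smo_less_iff[OF assms(1)])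
  ultimately show ?thesis by simp
qed

lemma a_surj:
  assumes "strict_mono_on {0<..} (a::real\<Rightarrow>real)" "continuous_on {0<..} a"
    "(a \<longlongrightarrow> 0) (at_right 0)" "filterlim a at_top at_top" "0 < t"
  shows "\<exists>x>0. a x = t"
proof -
  have "eventually (\<lambda>y. a y < t) (at_right 0)"
    using assms(3) assms(5) by (simp add: order_tendstoD(2))
  then obtain y where y: "0 < y" "a y < t"
    unfolding eventually_at_right_field by (metis field_lbound_gt_zero less_numeral_extra(1) order_less_irrefl) 
  have "eventually (\<lambda>z. t < a z) at_top"
    using assms(4) by (simp add: filterlim_at_top_dense)
  then obtain N where N: "\<And>z. z \<ge> N \<Longrightarrow> t < a z" unfolding eventually_at_top_linorder by blast
  define z where "z = max N (y+1)"
  have z: "t < a z" "y \<le> z" using N by (auto simp: z_def)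
  have "continuous_on {y..z} a" using y(1) by (intro continuous_on_subset[OF assms(2)]) auto
  then obtain x where "y \<le> x" "x \<le> z" "a x = t"
    using IVT'[of a y t z] y z by force
  then show ?thesis using y(1) by (intro exI[of _ x]) auto
qed

lemma a_inv:
  assumes "strict_mono_on {0<..} (a::real\<Rightarrow>real)" "continuous_on {0<..} a"
    "(a \<longlongrightarrow> 0) (at_right 0)" "filterlim a at_top at_top" "0 < t"
  shows "0 < inv_into {0<..} a t" "a (inv_into {0<..} a t) = t"
proof -
  have "t \<in> a ` {0<..}" using a_surj[OF assms] by auto
  then show "0 < inv_into {0<..} a t" "a (inv_into {0<..} a t) = t"
    using inv_into_into[of t a "{0<..}"] f_inv_into_f[of t a "{0<..}"] by auto
qed

lemma a_inv_le:
  assumes "strict_mono_on {0<..} (a::real\<Rightarrow>real)" "continuous_on {0<..} a"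
    "(a \<longlongrightarrow> 0) (at_right 0)" "filterlim a at_top at_top" "0 < t" "0 < x"
  shows "x \<le> inv_into {0<..} a t \<longleftrightarrow> a x \<le> t"
  using a_inv[OF assms(1-5)] smo_le_iff[OF assms(1) assms(6), of "inv_into {0<..} a t"] by auto

lemma wt_nonneg: "0 \<le> wt p v1 x"
  unfolding wt_def by simp

lemma lebesgue_on_meas_to_lebesgue:
  fixes g :: "real \<Rightarrow> real"
  assumes "g \<in> borel_measurable (lebesgue_on {0<..})" "S \<subseteq> {0<..}" "S \<in> sets lebesgue"
  shows "(\<lambda>x. indicator S x * g x) \<in> borel_measurable lebesgue"
proof -
  have "(\<lambda>x. indicator {0<..} x *\<^sub>R g x) \<in> borel_measurable lebesgue"
    using assms(1) by (subst borel_measurable_restrict_space_iff[symmetric]) auto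
  then have "(\<lambda>x. indicator S x * (indicator {0<..} x *\<^sub>R g x)) \<in> borel_measurable lebesgue"
    using assms(3) by (intro borel_measurable_times borel_measurable_indicator) auto
  moreover have "(\<lambda>x. indicator S x * (indicator {0<..} x *\<^sub>R g x)) = (\<lambda>x. indicator S x * g x)"
    using assms(2) by (intro ext) (auto simp: indicator_def subset_eq)
  ultimately show ?thesis by simp
qed

lemma wt_absint:
  assumes v1: "weight_class p v1" and inv: "Lloc (conj_exp p) (\<lambda>x. 1 / v1 x)" and u: "0 < u"
  shows "wt p v1 absolutely_integrable_on {u..v}"
proof -
  have m1: "(\<lambda>x. 1 / v1 x) \<in> borel_measurable (lebesgue_on {0<..})" using inv unfolding Lloc_def by auto
  then have m2: "wt p v1 \<in> borel_measurable (lebesgue_on {0<..})"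
    unfolding wt_def by measurable
  have sub: "{u..v} \<subseteq> {0<..}" using u by auto
  have meas: "(\<lambda>x. indicator {u..v} x * wt p v1 x) \<in> borel_measurable lebesgue"
    by (rule lebesgue_on_meas_to_lebesgue[OF m2 sub]) auto
  have fin: "(\<integral>\<^sup>+ x\<in>{u..v}. ennreal (\<bar>1 / v1 x\<bar> powr conj_exp p) \<partial>lebesgue) < \<infinity>"
  proof (cases "u \<le> v")
    case True then show ?thesis using inv u unfolding Lloc_def by auto
  qed simp
  have pos: "\<And>x. x > 0 \<Longrightarrow> 0 \<le> v1 x" using v1 unfolding weight_class_def by auto
  have eq: "\<And>x. ennreal (norm (indicator {u..v} x * wt p v1 x)) = ennreal (\<bar>1 / v1 x\<bar> powr conj_exp p) * indicator {u..v} x"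
  proof -
    fix x show "ennreal (norm (indicator {u..v} x * wt p v1 x)) = ennreal (\<bar>1 / v1 x\<bar> powr conj_exp p) * indicator {u..v} x"
    proof (cases "x \<in> {u..v}")
      case True
      then have "0 \<le> v1 x" using pos u by auto
      then show ?thesis using True by (simp add: wt_def indicator_def)
    qed (auto simp add: indicator_def)
  qed
  have "integrable lebesgue (\<lambda>x. indicator {u..v} x * wt p v1 x)"
    apply (rule integrableI_bounded[OF meas])
    using fin by (simp only: eq)
  then show ?thesis unfolding set_integrable_def by simp
qed

lemma small_interval:
  fixes F :: "real set"
  assumes F: "F \<in> sets lebesgue" "F \<subseteq> {\<alpha>0..\<beta>0}" "emeasure lebesgue F > 0" and eta: "0 < \<eta>"
  shows "\<exists>\<alpha> \<beta>. \<alpha>0 \<le> \<alpha> \<and> \<alpha> \<le> \<beta> \<and> \<beta> \<le> \<beta>0 \<and> \<beta> - \<alpha> < \<eta> \<and> emeasure lebesgue (F \<inter> {\<alpha>..\<beta>}) > 0"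
proof (rule ccontr)
  assume nt: "\<not> ?thesis"
  have H: "\<And>\<alpha> \<beta>. \<alpha>0 \<le> \<alpha> \<Longrightarrow> \<alpha> \<le> \<beta> \<Longrightarrow> \<beta> \<le> \<beta>0 \<Longrightarrow> \<beta> - \<alpha> < \<eta> \<Longrightarrow> F \<inter> {\<alpha>..\<beta>} \<in> null_sets lebesgue"
  proof -
    fix \<alpha> \<beta> assume h: "\<alpha>0 \<le> \<alpha>" "\<alpha> \<le> \<beta>" "\<beta> \<le> \<beta>0" "\<beta> - \<alpha> < \<eta>"
    then have "\<not> emeasure lebesgue (F \<inter> {\<alpha>..\<beta>}) > 0" using nt by blast
    then show "F \<inter> {\<alpha>..\<beta>} \<in> null_sets lebesgue" using F(1) by (auto simp: null_sets_def)
  qed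
  have ne: "\<alpha>0 \<le> \<beta>0"
  proof (rule ccontr)
    assume "\<not> \<alpha>0 \<le> \<beta>0" then have "F = {}" using F(2) by auto
    then show False using F(3) by simp
  qed
  define d where "d = \<eta>/2"
  define m where "m = (\<lambda>k::nat. min \<beta>0 (\<alpha>0 + real k * d))"
  have d: "0 < d" "d < \<eta>" using eta by (auto simp: d_def)
  have m: "\<And>k. \<alpha>0 \<le> m k \<and> m k \<le> \<beta>0" using ne d by (auto simp: m_def)
  have mono: "\<And>k. m k \<le> m (Suc k)" using d by (auto simp: m_def algebra_simps)
  have step: "\<And>k. m (Suc k) - m k \<le> d" using d by (auto simp: m_def algebra_simps min_def)
  have N: "\<And>n. F \<inter> {\<alpha>0..m n} \<in> null_sets lebesgue"
  proof -
    fix n show "F \<inter> {\<alpha>0..m n} \<in> null_sets lebesgue"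
    proof (induction n)
      case 0
      have "m 0 = \<alpha>0" using ne by (simp add: m_def)
      then show ?case using H[of \<alpha>0 \<alpha>0] ne eta by simp
    next
      case (Suc n)
      have "F \<inter> {m n..m (Suc n)} \<in> null_sets lebesgue"
      proof (rule H)
        show "\<alpha>0 \<le> m n" "m n \<le> m (Suc n)" "m (Suc n) \<le> \<beta>0" using m mono by auto
        show "m (Suc n) - m n < \<eta>" using step[of n] d by linarith
      qed
      then have U: "(F \<inter> {\<alpha>0..m n}) \<union> (F \<inter> {m n..m (Suc n)}) \<in> null_sets lebesgue"
        using Suc by auto
      show ?case
        by (rule null_sets_subset[OF U]) (use F(1) in auto)
    qed
  qed
  obtain n::nat where n: "(\<beta>0 - \<alpha>0) / d \<le> n" using real_arch_simple by blast
  have "\<beta>0 - \<alpha>0 \<le> real n * d" using n d by (simp add: divide_le_eq)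
  then have "m n = \<beta>0" by (simp add: m_def)
  then have "F \<inter> {\<alpha>0..m n} = F" using F(2) by auto
  then have "F \<in> null_sets lebesgue" using N[of n] by simp
  then show False using F(3) by auto
qed

lemma meas_Icc: "(l::real) \<le> u \<Longrightarrow> measure lebesgue {l..u} = u - l"
  by simp

lemma Icc_fmeas: "{l..u::real} \<in> fmeasurable lebesgue"
  by (simp add: bounded_set_imp_lmeasurable)

lemma three_split:
  fixes E :: "real set"
  assumes E: "E \<in> sets lebesgue" "E \<subseteq> {\<alpha>..\<beta>}" "emeasure lebesgue E > 0"
  shows "\<exists>E1 E2 E3. E1 \<in> sets lebesgue \<and> E2 \<in> sets lebesgue \<and> E3 \<in> sets lebesgue \<and>
     E1 \<subseteq> E \<and> E2 \<subseteq> E \<and> E3 \<subseteq> E \<and> E1 \<inter> E2 = {} \<and> E1 \<inter> E3 = {} \<and> E2 \<inter> E3 = {} \<and>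
     measure lebesgue E1 > 0 \<and> measure lebesgue E2 > 0 \<and> measure lebesgue E3 > 0"
proof -
  have Ef: "E \<in> fmeasurable lebesgue"
    using E(1,2) by (intro fmeasurableI2[OF Icc_fmeas]) auto
  define m where "m = measure lebesgue E"
  have m: "m > 0" using E(3) Ef by (simp add: m_def emeasure_eq_measure2)
  define \<phi> where "\<phi> = (\<lambda>s. measure lebesgue (E \<inter> {..s}))"
  have fm: "\<And>s. E \<inter> {..s} \<in> fmeasurable lebesgue"
    using E(1) by (intro fmeasurableI2[OF Ef]) auto
  have ab: "\<alpha> \<le> \<beta>"
  proof (rule ccontr)
    assume "\<not> \<alpha> \<le> \<beta>" then have "E = {}" using E(2) by auto
    then show False using E(3) by simp
  qed
  have lip: "\<And>s s'. s \<le> s' \<Longrightarrow> \<phi> s \<le> \<phi> s' \<and> \<phi> s' \<le> \<phi> s + (s' - s)"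
  proof -
    fix s s' :: real assume ss: "s \<le> s'"
    have "\<phi> s \<le> \<phi> s'" unfolding \<phi>_def
      using ss E(1) by (intro measure_mono_fmeasurable[OF _ _ fm]) auto
    moreover have "\<phi> s' \<le> \<phi> s + measure lebesgue {s..s'}"
    proof -
      have "\<phi> s' \<le> measure lebesgue ((E \<inter> {..s}) \<union> {s..s'})" unfolding \<phi>_def
        using E(1) by (intro measure_mono_fmeasurable) (auto intro: fmeasurable.Un fm Icc_fmeas)
      also have "\<dots> \<le> \<phi> s + measure lebesgue {s..s'}" unfolding \<phi>_def
        using E(1) by (intro measure_Un_le) auto
      finally show ?thesis .
    qed
    ultimately show "\<phi> s \<le> \<phi> s' \<and> \<phi> s' \<le> \<phi> s + (s' - s)" using ss by simp
  qed
  have cont: "continuous_on {\<alpha>..\<beta>} \<phi>"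
    unfolding continuous_on_iff
  proof (intro ballI allI impI)
    fix x x' and e :: real assume "0 < e"
    then show "\<exists>d>0. \<forall>x'\<in>{\<alpha>..\<beta>}. dist x' x < d \<longrightarrow> dist (\<phi> x') (\<phi> x) < e"
    proof (intro exI[of _ e] conjI ballI impI)
      fix y assume "dist y x < e"
      then show "dist (\<phi> y) (\<phi> x) < e"
        using lip[of x y] lip[of y x] by (cases "x \<le> y") (auto simp: dist_real_def abs_if)
    qed
  qed
  have p\<alpha>: "\<phi> \<alpha> = 0"
  proof -
    have "\<phi> \<alpha> \<le> measure lebesgue {\<alpha>..\<alpha>}" unfolding \<phi>_def
      using E by (intro measure_mono_fmeasurable[OF _ _ Icc_fmeas]) auto
    then show ?thesis by (simp add: \<phi>_def measure_nonneg antisym)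
  qed
  have p\<beta>: "\<phi> \<beta> = m" using E(2) by (simp add: \<phi>_def m_def Int_absorb2 subset_eq)
  obtain s1 where s1: "\<alpha> \<le> s1" "s1 \<le> \<beta>" "\<phi> s1 = m/3"
    using IVT'[of \<phi> \<alpha> "m/3" \<beta>, OF _ _ ab cont] p\<alpha> p\<beta> m by auto
  obtain s2 where s2: "\<alpha> \<le> s2" "s2 \<le> \<beta>" "\<phi> s2 = 2*m/3"
    using IVT'[of \<phi> \<alpha> "2*m/3" \<beta>, OF _ _ ab cont] p\<alpha> p\<beta> m by auto
  have s12: "s1 \<le> s2"
  proof (rule ccontr)
    assume "\<not> s1 \<le> s2" then have "\<phi> s2 \<le> \<phi> s1" using lip[of s2 s1] by auto
    then show False using s1 s2 m by simp
  qed
  define E1 where "E1 = E \<inter> {..s1}"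
  define E2 where "E2 = E \<inter> {s1<..s2}"
  define E3 where "E3 = E \<inter> {s2<..}"
  have sets: "E1 \<in> sets lebesgue" "E2 \<in> sets lebesgue" "E3 \<in> sets lebesgue"
    using E(1) by (auto simp: E1_def E2_def E3_def)
  have "measure lebesgue E1 = m/3" using s1 by (simp add: E1_def \<phi>_def)
  moreover have "\<phi> s2 \<le> measure lebesgue E1 + measure lebesgue E2"
  proof -
    have "E \<inter> {..s2} = E1 \<union> E2" using s12 by (auto simp: E1_def E2_def)
    then show ?thesis unfolding \<phi>_def using sets by (simp add: measure_Un_le)
  qed
  moreover have "m \<le> \<phi> s2 + measure lebesgue E3"
  proof -
    have "E = (E \<inter> {..s2}) \<union> E3" by (auto simp: E3_def)
    then have "m = measure lebesgue ((E \<inter> {..s2}) \<union> E3)" by (simp add: m_def)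
    also have "\<dots> \<le> \<phi> s2 + measure lebesgue E3" unfolding \<phi>_def using sets E(1) by (intro measure_Un_le) auto
    finally show ?thesis .
  qed
  ultimately have "measure lebesgue E1 > 0" "measure lebesgue E2 > 0" "measure lebesgue E3 > 0"
    using s2 m by auto
  then show ?thesis using sets
    by (intro exI[of _ E1] exI[of _ E2] exI[of _ E3]) (auto simp: E1_def E2_def E3_def)
qed

lemma level_set_meas:
  fixes f :: "real \<Rightarrow> real"
  assumes f: "f \<in> borel_measurable (lebesgue_on {0<..})" and a: "0 < \<alpha>"
  shows "{x\<in>{\<alpha>..\<beta>}. \<delta> \<le> \<bar>f x\<bar>} \<in> sets lebesgue"
proof -
  have "{x \<in> space (lebesgue_on {0<..}). \<delta> \<le> \<bar>f x\<bar>} \<in> sets (lebesgue_on {0<..})"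
    by (rule borel_measurable_le) (use f in auto)
  then have 1: "{x \<in> {0<..}. \<delta> \<le> \<bar>f x\<bar>} \<in> sets lebesgue"
    by (simp add: sets_restrict_space_iff)
  have eq: "{x\<in>{\<alpha>..\<beta>}. \<delta> \<le> \<bar>f x\<bar>} = {x \<in> {0<..}. \<delta> \<le> \<bar>f x\<bar>} \<inter> {\<alpha>..\<beta>}" using a by auto
  have 2: "{\<alpha>..\<beta>} \<in> sets lebesgue" by simp
  show ?thesis unfolding eq by (rule sets.Int[OF 1 2])
qed

lemma inv_le_swap: "0 < (y::real) \<Longrightarrow> 0 < M \<Longrightarrow> 1/y \<le> M \<Longrightarrow> 1/M \<le> y"
  by (metis inverse_eq_divide inverse_le_imp_le inverse_inverse_eq)

lemma find_level:
  fixes f :: "real \<Rightarrow> real"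
  assumes f: "f \<in> borel_measurable (lebesgue_on {0<..})"
    and nz: "emeasure lebesgue {x \<in> {0<..}. f x \<noteq> 0} > 0"
  shows "\<exists>\<alpha>0 \<beta>0 \<delta>. 0 < \<alpha>0 \<and> 0 < \<delta> \<and>
    emeasure lebesgue {x\<in>{\<alpha>0..\<beta>0}. \<delta> \<le> \<bar>f x\<bar>} > 0"
proof (rule ccontr)
  assume nt: "\<not> ?thesis"
  define N where "N = (\<lambda>n::nat. {x\<in>{1/(Suc n)..Suc n}. 1/(Suc n) \<le> \<bar>f x\<bar>})"
  have N0: "\<And>n. emeasure lebesgue (N n) = 0"
  proof -
    fix n :: nat
    have "0 < 1 / real (Suc n)" by simp
    then have "\<not> emeasure lebesgue (N n) > 0" using nt unfolding N_def by blast
    then show "emeasure lebesgue (N n) = 0" by (simp add: not_gr_zero)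
  qed
  have "\<And>n. N n \<in> sets lebesgue" unfolding N_def by (rule level_set_meas[OF f]) simp
  then have Ns: "range N \<subseteq> sets lebesgue" by auto
  have U: "emeasure lebesgue (\<Union>(range N)) = 0" by (rule emeasure_UN_eq_0[OF N0 Ns])
  have sub: "{x \<in> {0<..}. f x \<noteq> 0} \<subseteq> \<Union>(range N)"
  proof
    fix x assume x: "x \<in> {x \<in> {0<..}. f x \<noteq> 0}"
    then have xp: "0 < x" and fx: "0 < \<bar>f x\<bar>" by auto
    obtain n::nat where n: "max x (max (1/x) (1/\<bar>f x\<bar>)) \<le> n" using real_arch_simple by blast
    have n1: "x \<le> n" "1/x \<le> n" "1/\<bar>f x\<bar> \<le> n" using n by linarith+
    have "x \<le> Suc n" using n1 by simp
    moreover have "1 / real (Suc n) \<le> x"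
    proof -
      have h: "1/x \<le> real (Suc n)" using n1 by simp
      show ?thesis by (rule inv_le_swap[OF xp _ h]) simp
    qed
    moreover have "1 / real (Suc n) \<le> \<bar>f x\<bar>"
    proof -
      have h: "1/\<bar>f x\<bar> \<le> real (Suc n)" using n1 by simp
      show ?thesis by (rule inv_le_swap[OF fx _ h]) simp
    qed
    ultimately show "x \<in> \<Union>(range N)" by (auto simp: N_def)
  qed
  have "emeasure lebesgue {x \<in> {0<..}. f x \<noteq> 0} \<le> emeasure lebesgue (\<Union>(range N))"
    using Ns sub by (intro emeasure_mono) auto
  then show False using U nz by simp
qed

lemma lin2:
  fixes m1 m2 m3 n1 n2 n3 :: real
  assumes "m1 \<noteq> 0"
  shows "\<exists>c1 c2 c3. (c1 \<noteq> 0 \<or> c2 \<noteq> 0 \<or> c3 \<noteq> 0) \<and> c1*m1 + c2*m2 + c3*m3 = 0 \<and> c1*n1 + c2*n2 + c3*n3 = 0"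
proof (cases "m2*n3 - m3*n2 = 0 \<and> m3*n1 - m1*n3 = 0 \<and> m1*n2 - m2*n1 = 0")
  case True
  then show ?thesis using assms
    by (intro exI[of _ m2] exI[of _ "-m1"] exI[of _ 0]) (auto simp: algebra_simps)
next
  case False
  then show ?thesis
    by (intro exI[of _ "m2*n3 - m3*n2"] exI[of _ "m3*n1 - m1*n3"] exI[of _ "m1*n2 - m2*n1"]) (auto simp: algebra_simps)
qed

lemma borel_to_lebesgue: "f \<in> borel_measurable borel \<Longrightarrow> f \<in> borel_measurable lebesgue"
  by (rule measurable_completion) simp

locale cons =
  fixes p :: real and v1 a b :: "real \<Rightarrow> real" and \<alpha>0 \<beta>0 :: real
  assumes p: "1 < p"
    and wabs: "\<And>u v. 0 < u \<Longrightarrow> wt p v1 absolutely_integrable_on {u..v}"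
    and a_mono: "strict_mono_on {0<..} a" and b_mono: "strict_mono_on {0<..} b"
    and a_cont: "continuous_on {0<..} a" and b_cont: "continuous_on {0<..} b"
    and a0: "(a \<longlongrightarrow> 0) (at_right 0)" and ainf: "filterlim a at_top at_top"
    and ab: "\<And>t. 0 < t \<Longrightarrow> a t < t \<and> t < b t"
    and Vpos: "\<And>t. 0 < t \<Longrightarrow> 0 < V1 p v1 a b t"
    and a0pos: "0 < \<alpha>0" and a0b0: "\<alpha>0 \<le> \<beta>0"
begin

abbreviation "w \<equiv> wt p v1"
abbreviation "q \<equiv> conj_exp p"
abbreviation "V \<equiv> V1 p v1 a b"
abbreviation "A \<equiv> inv_into {0<..} a"
definition "s0 = a (a \<alpha>0)"
definition "S = b \<beta>0"
definition "\<Omega> = (\<lambda>s. integral {s0..s} w)"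
definition "Wtot = \<Omega> S - \<Omega> s0"

lemma q_pos: "0 < q" using p by (simp add: conj_exp_def)

lemma apos: "0 < x \<Longrightarrow> 0 < a x" using a_pos[OF a_mono a0] .

lemma a_le: "0 < x \<Longrightarrow> 0 < y \<Longrightarrow> a x \<le> a y \<longleftrightarrow> x \<le> y" using smo_le_iff[OF a_mono] by blast
lemma b_le: "0 < x \<Longrightarrow> 0 < y \<Longrightarrow> b x \<le> b y \<longleftrightarrow> x \<le> y" using smo_le_iff[OF b_mono] by blast

lemma Ainv: "0 < t \<Longrightarrow> 0 < A t \<and> a (A t) = t" using a_inv[OF a_mono a_cont a0 ainf] by blast
lemma Ainv_le: "0 < t \<Longrightarrow> 0 < x \<Longrightarrow> x \<le> A t \<longleftrightarrow> a x \<le> t"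
  using a_inv_le[OF a_mono a_cont a0 ainf] by blast

lemma s0_pos: "0 < s0" unfolding s0_def using apos a0pos by auto

lemma s0_le: "s0 \<le> a \<alpha>0" unfolding s0_def using ab[of "a \<alpha>0"] apos a0pos by auto

lemma b0_S: "\<beta>0 \<le> S" unfolding S_def using ab a0pos a0b0 by (simp add: less_imp_le)

lemma s0_S: "s0 \<le> S" using s0_le ab[of \<alpha>0] a0pos a0b0 b0_S by linarith

lemma w_int: "0 < u \<Longrightarrow> w integrable_on {u..v}" using wabs set_lebesgue_integral_eq_integral by blast

lemma w_nonneg: "0 \<le> w x" by (rule wt_nonneg)

lemma LINT_eq: "0 < u \<Longrightarrow> (LINT x:{u..v}|lebesgue. w x) = integral {u..v} w"
  using wabs set_lebesgue_integral_eq_integral by blast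

lemma Om_diff: "s0 \<le> u \<Longrightarrow> u \<le> v \<Longrightarrow> v \<le> S \<Longrightarrow> integral {u..v} w = \<Omega> v - \<Omega> u"
proof -
  assume h: "s0 \<le> u" "u \<le> v" "v \<le> S"
  have "integral {s0..u} w + integral {u..v} w = integral {s0..v} w"
    using h s0_pos by (intro Henstock_Kurzweil_Integration.integral_combine w_int) auto
  then show ?thesis unfolding \<Omega>_def by simp
qed

lemma Om_mono: "s0 \<le> u \<Longrightarrow> u \<le> v \<Longrightarrow> v \<le> S \<Longrightarrow> \<Omega> u \<le> \<Omega> v"
proof -
  assume h: "s0 \<le> u" "u \<le> v" "v \<le> S"
  have "0 \<le> integral {u..v} w" using h s0_pos w_nonneg by (intro integral_nonneg w_int) auto
  then show ?thesis using Om_diff[OF h] by simp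
qed

lemma LINT_Om: "s0 \<le> u \<Longrightarrow> u \<le> v \<Longrightarrow> v \<le> S \<Longrightarrow> (LINT x:{u..v}|lebesgue. w x) = \<Omega> v - \<Omega> u"
  using LINT_eq Om_diff s0_pos by simp

lemma Om_bounds: "s0 \<le> u \<Longrightarrow> u \<le> v \<Longrightarrow> v \<le> S \<Longrightarrow> 0 \<le> \<Omega> v - \<Omega> u \<and> \<Omega> v - \<Omega> u \<le> Wtot"
  using Om_mono[of u v] Om_mono[of s0 u] Om_mono[of v S] unfolding Wtot_def by auto

lemma Om_cont: "continuous_on {s0..S} \<Omega>"
  unfolding \<Omega>_def using w_int s0_pos by (intro indefinite_integral_continuous_1) auto

lemma Om_range: "s0 \<le> u \<Longrightarrow> u \<le> S \<Longrightarrow> 0 \<le> \<Omega> u \<and> \<Omega> u \<le> Wtot"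
  using Om_bounds[of s0 u] Om_mono[of u S] by (auto simp: \<Omega>_def Wtot_def)

lemma t_range: "a \<alpha>0 \<le> t \<Longrightarrow> t \<le> \<beta>0 \<Longrightarrow> s0 \<le> a t \<and> a t \<le> b t \<and> b t \<le> S"
proof -
  assume h: "a \<alpha>0 \<le> t" "t \<le> \<beta>0"
  have t0: "0 < t" using h apos a0pos by (meson less_le_trans)
  have "a (a \<alpha>0) \<le> a t" using h t0 apos a0pos a_le by auto
  moreover have "b t \<le> b \<beta>0" using h t0 b_le a0pos a0b0 by auto
  moreover have "a t \<le> b t" using ab[OF t0] by auto
  ultimately show ?thesis by (auto simp: s0_def S_def)
qed

lemma V_eq: "a \<alpha>0 \<le> t \<Longrightarrow> t \<le> \<beta>0 \<Longrightarrow> V t = \<Omega> (b t) - \<Omega> (a t)"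
  using t_range LINT_Om unfolding V1_def by blast

lemma V_le: "a \<alpha>0 \<le> t \<Longrightarrow> t \<le> \<beta>0 \<Longrightarrow> V t \<le> Wtot"
  using t_range V_eq Om_bounds by fastforce

lemma V_cont: "continuous_on {\<alpha>0..\<beta>0} V"
proof -
  have sub: "{\<alpha>0..\<beta>0} \<subseteq> {0<..}" using a0pos by auto
  have ca: "continuous_on {\<alpha>0..\<beta>0} a" "continuous_on {\<alpha>0..\<beta>0} b"
    using continuous_on_subset[OF a_cont sub] continuous_on_subset[OF b_cont sub] .
  have aa: "a \<alpha>0 \<le> \<alpha>0" using ab a0pos by (simp add: less_imp_le)
  have ra1: "a ` {\<alpha>0..\<beta>0} \<subseteq> {s0..S}"
  proof
    fix y assume "y \<in> a ` {\<alpha>0..\<beta>0}"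
    then obtain t where "t \<in> {\<alpha>0..\<beta>0}" "y = a t" by auto
    then show "y \<in> {s0..S}" using t_range[of t] aa by auto
  qed
  have ra2: "b ` {\<alpha>0..\<beta>0} \<subseteq> {s0..S}"
  proof
    fix y assume "y \<in> b ` {\<alpha>0..\<beta>0}"
    then obtain t where "t \<in> {\<alpha>0..\<beta>0}" "y = b t" by auto
    then show "y \<in> {s0..S}" using t_range[of t] aa by auto
  qed
  note ra = ra1 ra2
  have "continuous_on {\<alpha>0..\<beta>0} (\<lambda>t. \<Omega> (b t) - \<Omega> (a t))"
    by (intro continuous_on_diff continuous_on_compose2[OF Om_cont ca(2) ra(2)]
        continuous_on_compose2[OF Om_cont ca(1) ra(1)])
  then show ?thesis
    by (rule continuous_on_eq) (use V_eq aa in auto)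
qed

end

locale cons2 = cons +
  fixes \<alpha> \<beta> :: real and E1 E2 E3 :: "real set" and c1 c2 c3 :: real
  assumes ab0: "\<alpha>0 \<le> \<alpha>" "\<alpha> \<le> \<beta>" "\<beta> \<le> \<beta>0"
    and Es: "E1 \<in> sets lebesgue" "E2 \<in> sets lebesgue" "E3 \<in> sets lebesgue"
    and Esub: "E1 \<subseteq> {\<alpha>..\<beta>}" "E2 \<subseteq> {\<alpha>..\<beta>}" "E3 \<subseteq> {\<alpha>..\<beta>}"
    and disj: "E1 \<inter> E2 = {}" "E1 \<inter> E3 = {}" "E2 \<inter> E3 = {}"
    and con1: "c1 * measure lebesgue E1 + c2 * measure lebesgue E2 + c3 * measure lebesgue E3 = 0"
    and con2: "c1 * (LINT x|lebesgue. indicator E1 x * \<Omega> (a x)) + c2 * (LINT x|lebesgue. indicator E2 x * \<Omega> (a x))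
              + c3 * (LINT x|lebesgue. indicator E3 x * \<Omega> (a x)) = 0"
begin

definition "E = E1 \<union> E2 \<union> E3"
definition "H = (\<lambda>x. c1 * indicator E1 x + c2 * indicator E2 x + c3 * indicator E3 x)"
definition "Habs = (\<lambda>x. \<bar>c1\<bar> * indicator E1 x + \<bar>c2\<bar> * indicator E2 x + \<bar>c3\<bar> * indicator E3 x)"
definition "Hsum = \<bar>c1\<bar> * measure lebesgue E1 + \<bar>c2\<bar> * measure lebesgue E2 + \<bar>c3\<bar> * measure lebesgue E3"
definition "g = (\<lambda>x. H x * V x)"
definition "Bad = {a \<alpha>..a \<beta>} \<union> {\<alpha>..\<beta>}"

lemma E_sub: "E \<subseteq> {\<alpha>..\<beta>}" using Esub by (auto simp: E_def)
lemma E_pos: "x \<in> E \<Longrightarrow> 0 < x" using E_sub ab0 a0pos by force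
lemma E_a0b0: "x \<in> E \<Longrightarrow> \<alpha>0 \<le> x \<and> x \<le> \<beta>0" using E_sub ab0 by force

lemma H_out: "x \<notin> E \<Longrightarrow> H x = 0" by (auto simp: H_def E_def)
lemma Habs_out: "x \<notin> E \<Longrightarrow> Habs x = 0" by (auto simp: Habs_def E_def)
lemma abs_H: "\<bar>H x\<bar> = Habs x"
  using disj by (auto simp: H_def Habs_def indicator_def)
lemma Habs_nonneg: "0 \<le> Habs x" by (simp add: Habs_def)

lemma g_div: "g x / V x = H x"
proof (cases "x \<in> E")
  case True then have "0 < V x" using Vpos E_pos by auto
  then show ?thesis by (simp add: g_def)
qed (simp add: g_def H_out)

lemma E_fin: "E1 \<in> fmeasurable lebesgue" "E2 \<in> fmeasurable lebesgue" "E3 \<in> fmeasurable lebesgue"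
  using Es Esub by (auto intro: fmeasurableI2[OF Icc_fmeas])

lemma E_fin': "emeasure lebesgue E1 < \<infinity>" "emeasure lebesgue E2 < \<infinity>" "emeasure lebesgue E3 < \<infinity>"
  using E_fin by (auto simp: fmeasurable_def)

lemma int_ind: "integrable lebesgue (indicator E1 :: real \<Rightarrow> real)" "integrable lebesgue (indicator E2 :: real \<Rightarrow> real)"
  "integrable lebesgue (indicator E3 :: real \<Rightarrow> real)"
  using Es E_fin' by (auto intro: integrable_real_indicator)

lemma int_H: "integrable lebesgue H" unfolding H_def using int_ind by auto
lemma int_Habs: "integrable lebesgue Habs" unfolding Habs_def using int_ind by auto

lemma LINT_ind: "(LINT x|lebesgue. indicator E1 x) = measure lebesgue E1" "(LINT x|lebesgue. indicator E2 x) = measure lebesgue E2"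
  "(LINT x|lebesgue. indicator E3 x) = measure lebesgue E3"
  by (simp_all add: Bochner_Integration.integral_indicator)

lemma LINT_H: "(LINT x|lebesgue. H x) = 0"
  unfolding H_def using int_ind con1 by (simp add: LINT_ind)

lemma LINT_Habs: "(LINT x|lebesgue. Habs x) = Hsum"
  unfolding Habs_def Hsum_def using int_ind by (simp add: LINT_ind)

lemma Hsum_nonneg: "0 \<le> Hsum" unfolding Hsum_def by (simp add: measure_nonneg)

lemma ax_range: "x \<in> E \<Longrightarrow> s0 \<le> a x \<and> a x \<le> S"
proof -
  assume x: "x \<in> E"
  have "a \<alpha>0 \<le> a x" using E_a0b0[OF x] a0pos E_pos[OF x] a_le by auto
  moreover have "a x \<le> x" using ab E_pos[OF x] by (simp add: less_imp_le)
  ultimately show ?thesis using s0_le E_a0b0[OF x] b0_S by auto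
qed

lemma Oma_meas: "(\<lambda>x. indicator {\<alpha>0..\<beta>0} x * \<Omega> (a x)) \<in> borel_measurable lebesgue"
proof -
  have sub: "{\<alpha>0..\<beta>0} \<subseteq> {0<..}" using a0pos by auto
  have ca: "continuous_on {\<alpha>0..\<beta>0} a" using continuous_on_subset[OF a_cont sub] .
  have ra: "a ` {\<alpha>0..\<beta>0} \<subseteq> {s0..S}"
  proof
    fix y assume "y \<in> a ` {\<alpha>0..\<beta>0}"
    then obtain t where t: "t \<in> {\<alpha>0..\<beta>0}" "y = a t" by auto
    have "a \<alpha>0 \<le> t" using ab[of \<alpha>0] a0pos t by auto
    then show "y \<in> {s0..S}" using t_range[of t] t by auto
  qed
  have "continuous_on {\<alpha>0..\<beta>0} (\<lambda>x. \<Omega> (a x))" by (rule continuous_on_compose2[OF Om_cont ca ra])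
  then have "(\<lambda>x. indicator {\<alpha>0..\<beta>0} x *\<^sub>R \<Omega> (a x)) \<in> borel_measurable borel"
    by (intro borel_measurable_continuous_on_indicator) auto
  then show ?thesis using borel_to_lebesgue by simp
qed

lemma int_Oma: assumes "Ei \<in> sets lebesgue" "Ei \<subseteq> E"
  shows "integrable lebesgue (\<lambda>x. indicator Ei x * \<Omega> (a x))"
proof -
  have eq: "(\<lambda>x. indicator Ei x * \<Omega> (a x)) = (\<lambda>x. indicator Ei x * (indicator {\<alpha>0..\<beta>0} x * \<Omega> (a x)))"
    using assms(2) E_a0b0 by (auto simp: indicator_def fun_eq_iff)
  have m: "(\<lambda>x. indicator Ei x * \<Omega> (a x)) \<in> borel_measurable lebesgue"
    unfolding eq using assms(1) by (rule borel_measurable_times[OF borel_measurable_indicator Oma_meas])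
  have "Ei \<in> fmeasurable lebesgue"
    using assms E_sub by (intro fmeasurableI2[OF Icc_fmeas[of \<alpha> \<beta>]]) auto
  then have fin: "emeasure lebesgue Ei < \<infinity>" unfolding fmeasurable_def by blast
  show ?thesis
  proof (rule integrableI_bounded_set[OF assms(1) m fin, where B=Wtot])
    show "AE x\<in>Ei in lebesgue. norm (indicator Ei x * \<Omega> (a x)) \<le> Wtot"
      using assms(2) ax_range Om_range by (auto intro!: AE_I2 simp: indicator_def)
    show "AE x in lebesgue. x \<notin> Ei \<longrightarrow> indicator Ei x * \<Omega> (a x) = 0"
      by (auto intro!: AE_I2)
  qed
qed

end

context cons2 begin

lemma aab: "a \<alpha> \<le> a \<beta>" using a_le ab0 a0pos by auto
lemma alpha_pos: "0 < \<alpha>" using ab0 a0pos by auto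

lemma out_cases:
  assumes t: "0 < t" "t \<notin> Bad"
  shows "(\<forall>x\<in>E. x \<notin> {t..A t}) \<or> (t < \<alpha> \<and> a \<beta> < t \<and> (\<forall>x\<in>E. x \<in> {t..A t}))"
proof -
  have nb: "\<not> (a \<alpha> \<le> t \<and> t \<le> a \<beta>)" "\<not> (\<alpha> \<le> t \<and> t \<le> \<beta>)" using t(2) by (auto simp: Bad_def)
  consider "t < a \<alpha>" | "\<beta> < t" | "a \<beta> < t \<and> t < \<alpha>" using nb by linarith
  then show ?thesis
  proof cases
    case 1
    have "\<forall>x\<in>E. x \<notin> {t..A t}"
    proof (intro ballI)
      fix x assume x: "x \<in> E"
      have "a \<alpha> \<le> a x" using x E_sub alpha_pos E_pos a_le by auto
      then have "\<not> a x \<le> t" using 1 by auto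
      then show "x \<notin> {t..A t}" using Ainv_le[OF t(1) E_pos[OF x]] by auto
    qed
    then show ?thesis by blast
  next
    case 2
    have "\<forall>x\<in>E. x \<notin> {t..A t}" using E_sub 2 by force
    then show ?thesis by blast
  next
    case 3
    have "\<forall>x\<in>E. x \<in> {t..A t}"
    proof (intro ballI)
      fix x assume x: "x \<in> E"
      have "x \<le> \<beta>" "\<alpha> \<le> x" using x E_sub by auto
      then have "a x \<le> a \<beta>" using E_pos[OF x] alpha_pos ab0 a_le by auto
      then have "a x \<le> t" using 3 by auto
      then have "x \<le> A t" using Ainv_le[OF t(1) E_pos[OF x]] by auto
      moreover have "t \<le> x" using 3 \<open>\<alpha> \<le> x\<close> by auto
      ultimately show "x \<in> {t..A t}" by auto
    qed
    then show ?thesis using 3 by blast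
  qed
qed

lemma innerC_zero:
  assumes t: "0 < t" "t \<notin> Bad"
  shows "(LINT x:{t..A t}|lebesgue. g x / V x) = 0"
proof -
  have "(LINT x:{t..A t}|lebesgue. g x / V x) = (LINT x|lebesgue. indicator {t..A t} x * H x)"
    unfolding set_lebesgue_integral_def by (simp add: g_div)
  also have "\<dots> = 0"
    using out_cases[OF t]
  proof
    assume h: "\<forall>x\<in>E. x \<notin> {t..A t}"
    have "(\<lambda>x. indicator {t..A t} x * H x) = (\<lambda>x. 0)"
      using h H_out by (force simp: indicator_def fun_eq_iff)
    then show ?thesis by simp
  next
    assume h: "t < \<alpha> \<and> a \<beta> < t \<and> (\<forall>x\<in>E. x \<in> {t..A t})"
    have "(\<lambda>x. indicator {t..A t} x * H x) = H"
      using h H_out by (force simp: indicator_def fun_eq_iff)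
    then show ?thesis using LINT_H by simp
  qed
  finally show ?thesis .
qed

lemma innerC_bound: "\<bar>LINT x:{t..A t}|lebesgue. g x / V x\<bar> \<le> Hsum"
proof -
  have "\<bar>LINT x:{t..A t}|lebesgue. g x / V x\<bar> = \<bar>LINT x|lebesgue. indicator {t..A t} x * H x\<bar>"
    unfolding set_lebesgue_integral_def by (simp add: g_div)
  also have "\<dots> \<le> (LINT x|lebesgue. \<bar>indicator {t..A t} x * H x\<bar>)" by (rule integral_abs_bound)
  also have "\<dots> \<le> (LINT x|lebesgue. Habs x)"
  proof (rule integral_mono'[OF int_Habs])
    fix x show "\<bar>indicator {t..A t} x * H x\<bar> \<le> Habs x" using abs_H[of x]
      by (auto simp: indicator_def abs_mult)
    show "0 \<le> Habs x" by (rule Habs_nonneg)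
  qed
  finally show ?thesis using LINT_Habs by simp
qed

end

context cons2 begin

abbreviation "L x t \<equiv> (LINT y:{a x..t}|lebesgue. w y)"

lemma innerG_zero:
  assumes t: "0 < t" "t \<notin> Bad"
  shows "(LINT x:{t..A t}|lebesgue. g x / V x * L x t) = 0"
proof -
  have "(LINT x:{t..A t}|lebesgue. g x / V x * L x t) = (LINT x|lebesgue. indicator {t..A t} x * (H x * L x t))"
    unfolding set_lebesgue_integral_def by (simp add: g_div)
  also have "\<dots> = 0"
    using out_cases[OF t]
  proof
    assume h: "\<forall>x\<in>E. x \<notin> {t..A t}"
    have "(\<lambda>x. indicator {t..A t} x * (H x * L x t)) = (\<lambda>x. 0)"
      using h H_out by (force simp: indicator_def fun_eq_iff)
    then show ?thesis by simp
  next
    assume h: "t < \<alpha> \<and> a \<beta> < t \<and> (\<forall>x\<in>E. x \<in> {t..A t})"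
    have tS: "t \<le> S" using h ab0 b0_S by auto
    have Lx: "\<And>x. x \<in> E \<Longrightarrow> L x t = \<Omega> t - \<Omega> (a x)"
    proof -
      fix x assume x: "x \<in> E"
      have "a x \<le> t" using h x Ainv_le[OF t(1) E_pos[OF x]] by auto
      then show "L x t = \<Omega> t - \<Omega> (a x)" using LINT_Om ax_range[OF x] tS by auto
    qed
    define F where "F = (\<lambda>x. c1 * (indicator E1 x * \<Omega> (a x)) + c2 * (indicator E2 x * \<Omega> (a x))
              + c3 * (indicator E3 x * \<Omega> (a x)))"
    have eq: "(\<lambda>x. indicator {t..A t} x * (H x * L x t)) = (\<lambda>x. \<Omega> t * H x - F x)"
    proof
      fix x show "indicator {t..A t} x * (H x * L x t) = \<Omega> t * H x - F x"
      proof (cases "x \<in> E")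
        case True
        have i1: "indicator {t..A t} x = (1::real)" using h True by (auto simp: indicator_def)
        have Lx': "L x t = \<Omega> t - \<Omega> (a x)" by (rule Lx[OF True])
        show ?thesis unfolding i1 Lx' using True disj
          by (auto simp: F_def H_def E_def indicator_def algebra_simps)
      next
        case False
        then show ?thesis by (auto simp: F_def H_def E_def indicator_def)
      qed
    qed
    have iO: "integrable lebesgue (\<lambda>x. indicator E1 x * \<Omega> (a x))" "integrable lebesgue (\<lambda>x. indicator E2 x * \<Omega> (a x))"
      "integrable lebesgue (\<lambda>x. indicator E3 x * \<Omega> (a x))"
      using int_Oma Es by (auto simp: E_def)
    have iF: "integrable lebesgue F" unfolding F_def using iO by auto
    have "(LINT x|lebesgue. F x) = 0" unfolding F_def using iO con2 by simp
    then have "(LINT x|lebesgue. \<Omega> t * H x - F x) = 0"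
      using iF int_H LINT_H by simp
    then show ?thesis unfolding eq .
  qed
  finally show ?thesis .
qed

lemma Bad_range: "t \<in> Bad \<Longrightarrow> a \<alpha>0 \<le> t \<and> t \<le> \<beta>0"
proof -
  assume t: "t \<in> Bad"
  have "a \<alpha>0 \<le> a \<alpha>" using a_le ab0 a0pos alpha_pos by auto
  moreover have "a \<beta> \<le> \<beta>" using ab[of \<beta>] ab0 alpha_pos by auto
  moreover have "a \<alpha> \<le> \<alpha>" using ab[of \<alpha>] alpha_pos by auto
  ultimately show ?thesis using t ab0 by (auto simp: Bad_def)
qed

lemma Bad_pos: "t \<in> Bad \<Longrightarrow> 0 < t"
  using Bad_range apos a0pos by (meson less_le_trans)

lemma Wtot_nonneg: "0 \<le> Wtot" using Om_bounds[of s0 s0] s0_S by auto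

lemma innerG_bound:
  assumes t: "t \<in> Bad"
  shows "\<bar>LINT x:{t..A t}|lebesgue. g x / V x * L x t\<bar> \<le> Wtot * Hsum"
proof -
  have t0: "0 < t" by (rule Bad_pos[OF t])
  have tr: "a \<alpha>0 \<le> t" "t \<le> \<beta>0" using Bad_range[OF t] by auto
  have "\<bar>LINT x:{t..A t}|lebesgue. g x / V x * L x t\<bar> = \<bar>LINT x|lebesgue. indicator {t..A t} x * (H x * L x t)\<bar>"
    unfolding set_lebesgue_integral_def by (simp add: g_div)
  also have "\<dots> \<le> (LINT x|lebesgue. \<bar>indicator {t..A t} x * (H x * L x t)\<bar>)" by (rule integral_abs_bound)
  also have "\<dots> \<le> (LINT x|lebesgue. Wtot * Habs x)"
  proof (rule integral_mono')
    show "integrable lebesgue (\<lambda>x. Wtot * Habs x)" using int_Habs by simp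
    fix x show "0 \<le> Wtot * Habs x" using Wtot_nonneg Habs_nonneg by simp
    show "\<bar>indicator {t..A t} x * (H x * L x t)\<bar> \<le> Wtot * Habs x"
    proof (cases "x \<in> E \<and> x \<in> {t..A t}")
      case True
      then have "a x \<le> t" using Ainv_le[OF t0 E_pos] by auto
      then have "0 \<le> L x t \<and> L x t \<le> Wtot"
        using LINT_Om[of "a x" t] Om_bounds[of "a x" t] ax_range True tr b0_S by auto
      then have "\<bar>H x * L x t\<bar> \<le> Habs x * Wtot"
        using abs_H[of x] Habs_nonneg[of x] by (simp add: abs_mult mult_left_mono)
      then show ?thesis using True by (simp add: mult.commute)
    next
      case False
      then have z: "indicator {t..A t} x * (H x * L x t) = 0" using H_out by (auto simp: indicator_def)
      show ?thesis unfolding z using Wtot_nonneg Habs_nonneg[of x] by simp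
    qed
  qed
  also have "\<dots> = Wtot * Hsum" using LINT_Habs by simp
  finally show ?thesis .
qed

end

lemma epow_le:
  assumes "I \<le> ennreal X" "0 \<le> X" "0 < s"
  shows "epow I s \<le> ennreal (X powr s)"
proof -
  have "I < top" using assms(1) ennreal_less_top by (rule le_less_trans)
  then have "I \<noteq> \<infinity>" by simp
  then have "I = ennreal (enn2real I)" by (simp add: ennreal_enn2real_if)
  then have "enn2real I \<le> X" using assms(1,2) by (metis ennreal_le_iff)
  then have "enn2real I powr s \<le> X powr s" using assms(3) by (intro powr_mono2) auto
  then show ?thesis using \<open>I \<noteq> \<infinity>\<close> unfolding epow_def by simp
qed

context cons2 begin

definition "IB = integral {a \<alpha>..a \<beta>} w + integral {\<alpha>..\<beta>} w"

lemma aalpha_pos: "0 < a \<alpha>" using apos alpha_pos by auto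

lemma IB_nonneg: "0 \<le> IB"
proof -
  have "0 \<le> integral {a \<alpha>..a \<beta>} w" using w_int[OF aalpha_pos] w_nonneg by (intro integral_nonneg) auto
  moreover have "0 \<le> integral {\<alpha>..\<beta>} w" using w_int[OF alpha_pos] w_nonneg by (intro integral_nonneg) auto
  ultimately show ?thesis by (simp add: IB_def)
qed

lemma nn_bound:
  assumes F: "\<And>t. 0 < t \<Longrightarrow> 0 \<le> F t \<and> F t \<le> C * (indicator {a \<alpha>..a \<beta>} t * w t + indicator {\<alpha>..\<beta>} t * w t)"
    and C: "0 \<le> C"
  shows "(\<integral>\<^sup>+ t\<in>{0<..}. ennreal (F t) \<partial>lebesgue) \<le> ennreal (C * IB)"
proof -
  have i1: "integrable lebesgue (\<lambda>t. indicator {a \<alpha>..a \<beta>} t * w t)"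
    using wabs[OF aalpha_pos, of "a \<beta>"] unfolding set_integrable_def by simp
  have i2: "integrable lebesgue (\<lambda>t. indicator {\<alpha>..\<beta>} t * w t)"
    using wabs[OF alpha_pos, of "\<beta>"] unfolding set_integrable_def by simp
  have l1: "(LINT t|lebesgue. indicator {a \<alpha>..a \<beta>} t * w t) = integral {a \<alpha>..a \<beta>} w"
    using set_lebesgue_integral_eq_integral(2)[OF wabs[OF aalpha_pos, of "a \<beta>"]]
    unfolding set_lebesgue_integral_def by simp
  have l2: "(LINT t|lebesgue. indicator {\<alpha>..\<beta>} t * w t) = integral {\<alpha>..\<beta>} w"
    using set_lebesgue_integral_eq_integral(2)[OF wabs[OF alpha_pos, of "\<beta>"]]
    unfolding set_lebesgue_integral_def by simp
  define G where "G = (\<lambda>t. C * (indicator {a \<alpha>..a \<beta>} t * w t + indicator {\<alpha>..\<beta>} t * w t))"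
  have iG: "integrable lebesgue G" unfolding G_def using i1 i2 by auto
  have G0: "\<And>t. 0 \<le> G t" unfolding G_def using C w_nonneg by auto
  have "(\<integral>\<^sup>+ t\<in>{0<..}. ennreal (F t) \<partial>lebesgue) = (\<integral>\<^sup>+ t. ennreal (F t * indicator {0<..} t) \<partial>lebesgue)"
    by (rule nn_integral_set_ennreal)
  also have "\<dots> \<le> (\<integral>\<^sup>+ t. ennreal (G t) \<partial>lebesgue)"
  proof (rule nn_integral_mono)
    fix t show "ennreal (F t * indicator {0<..} t) \<le> ennreal (G t)"
    proof (cases "0 < t")
      case True then show ?thesis using F[OF True] by (simp add: G_def)
    qed (simp)
  qed
  also have "\<dots> = ennreal (LINT t|lebesgue. G t)"
    using iG G0 by (intro nn_integral_eq_integral) auto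
  also have "(LINT t|lebesgue. G t) = C * IB"
    unfolding G_def IB_def using i1 i2 l1 l2 by simp
  finally show ?thesis .
qed

lemma ind_ge: "t \<in> Bad \<Longrightarrow> w t \<le> indicator {a \<alpha>..a \<beta>} t * w t + indicator {\<alpha>..\<beta>} t * w t"
  using w_nonneg[of t] by (auto simp: Bad_def indicator_def)

lemma ind_nonneg: "0 \<le> indicator {a \<alpha>..a \<beta>} t * w t + indicator {\<alpha>..\<beta>} t * w t"
  using w_nonneg[of t] by (auto simp: indicator_def)

lemma final_powr: "((Wtot * Hsum) powr q * IB) powr (1 / q) = Wtot * Hsum * IB powr (1 / q)"
proof -
  have "((Wtot * Hsum) powr q * IB) powr (1 / q) = ((Wtot * Hsum) powr q) powr (1/q) * IB powr (1 / q)"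
    using IB_nonneg by (simp add: powr_mult)
  also have "((Wtot * Hsum) powr q) powr (1/q) = Wtot * Hsum"
    using q_pos Wtot_nonneg Hsum_nonneg by (simp add: powr_powr)
  finally show ?thesis .
qed

lemma GG_bound: "GG p v1 a b g \<le> ennreal (Wtot * Hsum * IB powr (1 / q))"
proof -
  define C where "C = (Wtot * Hsum) powr q"
  have C0: "0 \<le> C" by (simp add: C_def)
  have "(\<integral>\<^sup>+ t\<in>{0<..}. ennreal (w t * \<bar>LINT x:{t..A t}|lebesgue. g x / V x * L x t\<bar> powr q) \<partial>lebesgue)
        \<le> ennreal (C * IB)"
  proof (rule nn_bound[OF _ C0])
    fix t :: real assume t: "0 < t"
    show "0 \<le> w t * \<bar>LINT x:{t..A t}|lebesgue. g x / V x * L x t\<bar> powr q \<and>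
          w t * \<bar>LINT x:{t..A t}|lebesgue. g x / V x * L x t\<bar> powr q
          \<le> C * (indicator {a \<alpha>..a \<beta>} t * w t + indicator {\<alpha>..\<beta>} t * w t)"
    proof (cases "t \<in> Bad")
      case True
      have "\<bar>LINT x:{t..A t}|lebesgue. g x / V x * L x t\<bar> powr q \<le> C"
        unfolding C_def using innerG_bound[OF True] q_pos by (intro powr_mono2) auto
      then have "w t * \<bar>LINT x:{t..A t}|lebesgue. g x / V x * L x t\<bar> powr q \<le> w t * C"
        using w_nonneg by (intro mult_left_mono) auto
      also have "\<dots> \<le> C * (indicator {a \<alpha>..a \<beta>} t * w t + indicator {\<alpha>..\<beta>} t * w t)"
        using ind_ge[OF True] C0 by (simp add: mult.commute mult_left_mono)
      finally show ?thesis using w_nonneg by simp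
    next
      case False
      then show ?thesis using innerG_zero[OF t False] C0 ind_nonneg by simp
    qed
  qed
  then have "GG p v1 a b g \<le> ennreal ((C * IB) powr (1 / q))"
    unfolding GG_def using C0 IB_nonneg q_pos by (intro epow_le) auto
  then show ?thesis using final_powr by (simp add: C_def)
qed

lemma CG_bound: "CG p v1 a b g \<le> ennreal (Wtot * Hsum * IB powr (1 / q))"
proof -
  define C where "C = (Wtot * Hsum) powr q"
  have C0: "0 \<le> C" by (simp add: C_def)
  have "(\<integral>\<^sup>+ t\<in>{0<..}. ennreal (w t * V t powr q * \<bar>LINT x:{t..A t}|lebesgue. g x / V x\<bar> powr q) \<partial>lebesgue)
        \<le> ennreal (C * IB)"
  proof (rule nn_bound[OF _ C0])
    fix t :: real assume t: "0 < t"
    show "0 \<le> w t * V t powr q * \<bar>LINT x:{t..A t}|lebesgue. g x / V x\<bar> powr q \<and>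
          w t * V t powr q * \<bar>LINT x:{t..A t}|lebesgue. g x / V x\<bar> powr q
          \<le> C * (indicator {a \<alpha>..a \<beta>} t * w t + indicator {\<alpha>..\<beta>} t * w t)"
    proof (cases "t \<in> Bad")
      case True
      have V: "0 \<le> V t" "V t \<le> Wtot" using Vpos[OF t] V_le Bad_range[OF True] by auto
      have "V t powr q * \<bar>LINT x:{t..A t}|lebesgue. g x / V x\<bar> powr q
            = (V t * \<bar>LINT x:{t..A t}|lebesgue. g x / V x\<bar>) powr q"
        using V by (simp add: powr_mult)
      also have "\<dots> \<le> C"
        unfolding C_def using innerC_bound[of t] V q_pos Hsum_nonneg
        by (intro powr_mono2 mult_mono) auto
      finally have "w t * (V t powr q * \<bar>LINT x:{t..A t}|lebesgue. g x / V x\<bar> powr q) \<le> w t * C"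
        using w_nonneg by (intro mult_left_mono) auto
      also have "\<dots> \<le> C * (indicator {a \<alpha>..a \<beta>} t * w t + indicator {\<alpha>..\<beta>} t * w t)"
        using ind_ge[OF True] C0 by (simp add: mult.commute mult_left_mono)
      finally show ?thesis using w_nonneg by (simp add: mult.assoc)
    next
      case False
      then show ?thesis using innerC_zero[OF t False] C0 ind_nonneg q_pos by simp
    qed
  qed
  then have "CG p v1 a b g \<le> ennreal ((C * IB) powr (1 / q))"
    unfolding CG_def using C0 IB_nonneg q_pos by (intro epow_le) auto
  then show ?thesis using final_powr by (simp add: C_def)
qed

lemma Wnorm_bound: "Wnorm p v1 a b g \<le> ennreal (2 * (Wtot * Hsum * IB powr (1 / q)))"
proof -
  have "Wnorm p v1 a b g \<le> ennreal (Wtot * Hsum * IB powr (1 / q)) + ennreal (Wtot * Hsum * IB powr (1 / q))"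
    unfolding Wnorm_def using GG_bound CG_bound by (rule add_mono)
  also have "\<dots> = ennreal (2 * (Wtot * Hsum * IB powr (1 / q)))"
    using Wtot_nonneg Hsum_nonneg by (simp add: ennreal_plus[symmetric] del: ennreal_plus)
  finally show ?thesis .
qed

end

context cons2 begin

lemma V_on_E: "x \<in> E \<Longrightarrow> 0 < V x \<and> V x \<le> Wtot"
proof -
  assume x: "x \<in> E"
  have "a \<alpha>0 \<le> x" using E_a0b0[OF x] ab[of \<alpha>0] a0pos by auto
  then show ?thesis using Vpos E_pos[OF x] V_le E_a0b0[OF x] by auto
qed

lemma g_meas: "g \<in> borel_measurable lebesgue"
proof -
  have "(\<lambda>x. indicator {\<alpha>0..\<beta>0} x *\<^sub>R V x) \<in> borel_measurable borel"
    using V_cont by (intro borel_measurable_continuous_on_indicator) auto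
  then have mV: "(\<lambda>x. indicator {\<alpha>0..\<beta>0} x * V x) \<in> borel_measurable lebesgue"
    using borel_to_lebesgue by simp
  have mH: "H \<in> borel_measurable lebesgue" unfolding H_def using Es by measurable
  have eq: "g = (\<lambda>x. H x * (indicator {\<alpha>0..\<beta>0} x * V x))"
  proof
    fix x show "g x = H x * (indicator {\<alpha>0..\<beta>0} x * V x)"
      by (cases "x \<in> E") (auto simp: g_def H_out E_a0b0 indicator_def)
  qed
  show ?thesis unfolding eq by (rule borel_measurable_times[OF mH mV])
qed

lemma g_abs: "\<bar>g x\<bar> \<le> Wtot * Habs x"
proof (cases "x \<in> E")
  case True
  have "V x * Habs x \<le> Wtot * Habs x" using V_on_E[OF True] Habs_nonneg[of x] by (intro mult_right_mono) auto
  then show ?thesis using V_on_E[OF True] abs_H[of x]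
    by (simp add: g_def abs_mult mult.commute)
qed (simp add: g_def H_out Habs_out)

lemma g_Lloc: "Lloc 1 g"
  unfolding Lloc_def
proof (intro conjI allI impI)
  show "g \<in> borel_measurable (lebesgue_on {0<..})"
    using g_meas by (rule measurable_restrict_space1)
  fix u v :: real
  have "(\<integral>\<^sup>+ x\<in>{u..v}. ennreal (\<bar>g x\<bar> powr 1) \<partial>lebesgue) \<le> (\<integral>\<^sup>+ x. ennreal (Wtot * Habs x) \<partial>lebesgue)"
  proof (rule nn_integral_mono)
    fix x show "ennreal (\<bar>g x\<bar> powr 1) * indicator {u..v} x \<le> ennreal (Wtot * Habs x)"
      using g_abs[of x] by (auto simp: indicator_def)
  qed
  also have "\<dots> = ennreal (LINT x|lebesgue. Wtot * Habs x)"
    using int_Habs Wtot_nonneg Habs_nonneg by (intro nn_integral_eq_integral) auto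
  also have "\<dots> < \<infinity>" by simp
  finally show "(\<integral>\<^sup>+ x\<in>{u..v}. ennreal (\<bar>g x\<bar> powr 1) \<partial>lebesgue) < \<infinity>" .
qed

lemma H_E: "x \<in> E1 \<Longrightarrow> H x = c1" "x \<in> E2 \<Longrightarrow> H x = c2" "x \<in> E3 \<Longrightarrow> H x = c3"
  using disj by (auto simp: H_def indicator_def)

lemma g_nonzero:
  assumes "(c1 \<noteq> 0 \<and> measure lebesgue E1 > 0) \<or> (c2 \<noteq> 0 \<and> measure lebesgue E2 > 0) \<or> (c3 \<noteq> 0 \<and> measure lebesgue E3 > 0)"
  shows "\<not> (AE x in lebesgue_on {0<..}. g x = 0)"
proof
  assume "AE x in lebesgue_on {0<..}. g x = 0"
  then have ae: "AE x in lebesgue. x \<in> {0<..} \<longrightarrow> g x = 0"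
    by (subst (asm) AE_restrict_space_iff) auto
  then obtain N where N: "{x \<in> space lebesgue. \<not> (x \<in> {0<..} \<longrightarrow> g x = 0)} \<subseteq> N"
     and N1: "emeasure lebesgue N = 0" and N2: "N \<in> sets lebesgue"
    by (rule AE_E)
  have N3: "N \<in> null_sets lebesgue" by (rule null_setsI[OF N1 N2])
  have gne: "\<And>x. x \<in> E \<Longrightarrow> H x \<noteq> 0 \<Longrightarrow> x \<in> N"
  proof -
    fix x assume x: "x \<in> E" "H x \<noteq> 0"
    have "g x \<noteq> 0" using x V_on_E[OF x(1)] by (simp add: g_def)
    then show "x \<in> N" using N E_pos[OF x(1)] by auto
  qed
  have z: "\<And>Ei. Ei \<in> sets lebesgue \<Longrightarrow> Ei \<subseteq> N \<Longrightarrow> measure lebesgue Ei = 0"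
    using N3 by (metis measure_eq_0_null_sets null_sets_subset)
  from assms show False
  proof (elim disjE conjE)
    assume c: "c1 \<noteq> 0" "measure lebesgue E1 > 0"
    have "E1 \<subseteq> N" using gne c H_E by (auto simp: E_def)
    then show False using z[OF Es(1)] c by simp
  next
    assume c: "c2 \<noteq> 0" "measure lebesgue E2 > 0"
    have "E2 \<subseteq> N" using gne c H_E by (auto simp: E_def)
    then show False using z[OF Es(2)] c by simp
  next
    assume c: "c3 \<noteq> 0" "measure lebesgue E3 > 0"
    have "E3 \<subseteq> N" using gne c H_E by (auto simp: E_def)
    then show False using z[OF Es(3)] c by simp
  qed
qed

lemma lower_bound:
  fixes f :: "real \<Rightarrow> real"
  assumes d: "0 \<le> \<delta>" and fE: "\<And>x. x \<in> E \<Longrightarrow> \<delta> \<le> \<bar>f x\<bar>"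
    and vm: "0 \<le> Vmin" "\<And>x. x \<in> {\<alpha>0..\<beta>0} \<Longrightarrow> Vmin \<le> V x"
  shows "ennreal (\<delta> * Vmin * Hsum) \<le> (\<integral>\<^sup>+ x\<in>{0<..}. ennreal \<bar>f x * g x\<bar> \<partial>lebesgue)"
proof -
  have "ennreal (\<delta> * Vmin * Hsum) = ennreal (LINT x|lebesgue. \<delta> * Vmin * Habs x)"
    using LINT_Habs by simp
  also have "\<dots> = (\<integral>\<^sup>+ x. ennreal (\<delta> * Vmin * Habs x) \<partial>lebesgue)"
    using int_Habs d vm Habs_nonneg by (intro nn_integral_eq_integral[symmetric]) auto
  also have "\<dots> \<le> (\<integral>\<^sup>+ x\<in>{0<..}. ennreal \<bar>f x * g x\<bar> \<partial>lebesgue)"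
  proof (rule nn_integral_mono)
    fix x show "ennreal (\<delta> * Vmin * Habs x) \<le> ennreal \<bar>f x * g x\<bar> * indicator {0<..} x"
    proof (cases "x \<in> E")
      case True
      have p: "0 < x" using E_pos[OF True] .
      have "Vmin \<le> V x" using vm(2) E_a0b0[OF True] by auto
      then have "\<delta> * Vmin \<le> \<bar>f x\<bar> * V x" using fE[OF True] d vm(1) by (intro mult_mono) auto
      then have "\<delta> * Vmin * Habs x \<le> \<bar>f x\<bar> * V x * Habs x" using Habs_nonneg by (intro mult_right_mono) auto
      also have "\<dots> = \<bar>f x * g x\<bar>" using abs_H[of x] V_on_E[OF True]
        by (simp add: g_def abs_mult)
      finally show ?thesis using p by (simp add: indicator_def)
    qed (simp add: Habs_out)
  qed
  finally show ?thesis .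
qed

end

lemma ratio_ge:
  fixes X Wn :: ennreal
  assumes X: "ennreal X0 \<le> X" and X0: "0 < X0" and W: "Wn \<le> ennreal Y" and Y: "0 < Y" and R: "X0 / Y = R"
  shows "ennreal R \<le> X / Wn"
proof (cases "Wn = 0")
  case True
  have "X \<noteq> 0" using X X0 by (metis ennreal_eq_0_iff le_zero_eq linorder_not_le)
  then show ?thesis using True by simp
next
  case False
  have "Wn < top" using W ennreal_less_top by (rule le_less_trans)
  then obtain y where y: "Wn = ennreal y" "0 \<le> y" by (cases Wn) auto
  have y0: "0 < y" using y False by (metis ennreal_0 order_le_less)
  have yY: "y \<le> Y" using W y Y by (simp add: ennreal_le_iff)
  have "ennreal R = ennreal (X0 / Y)" using R by simp
  also have "\<dots> \<le> ennreal (X0 / y)" using yY y0 X0 by (intro ennreal_leI divide_left_mono) auto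
  also have "\<dots> = ennreal X0 / ennreal y" using X0 y0 by (simp add: divide_ennreal)
  also have "\<dots> \<le> X / Wn" using X y by (simp add: divide_right_mono_ennreal)
  finally show ?thesis .
qed

lemma JW_top:
  fixes p :: real and v1 a b f :: "real \<Rightarrow> real"
  assumes p: "1 < p"
    and wabs: "\<And>u v. 0 < u \<Longrightarrow> wt p v1 absolutely_integrable_on {u..v}"
    and a_mono: "strict_mono_on {0<..} a" and b_mono: "strict_mono_on {0<..} b"
    and a_cont: "continuous_on {0<..} a" and b_cont: "continuous_on {0<..} b"
    and a0: "(a \<longlongrightarrow> 0) (at_right 0)" and ainf: "filterlim a at_top at_top"
    and ab: "\<And>t. 0 < t \<Longrightarrow> a t < t \<and> t < b t"
    and Vpos: "\<And>t. 0 < t \<Longrightarrow> 0 < V1 p v1 a b t"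
    and f_meas: "f \<in> borel_measurable (lebesgue_on {0<..})"
    and f_nz: "emeasure lebesgue {x \<in> {0<..}. f x \<noteq> 0} > 0"
  shows "JW p v1 a b f = \<infinity>"
proof -
  obtain \<alpha>0 \<beta>0 \<delta> where a0pos: "0 < \<alpha>0" and d0: "0 < \<delta>"
    and Fpos: "emeasure lebesgue {x\<in>{\<alpha>0..\<beta>0}. \<delta> \<le> \<bar>f x\<bar>} > 0"
    using find_level[OF f_meas f_nz] by blast
  define F where "F = {x\<in>{\<alpha>0..\<beta>0}. \<delta> \<le> \<bar>f x\<bar>}"
  have Fm: "F \<in> sets lebesgue" unfolding F_def by (rule level_set_meas[OF f_meas a0pos])
  have Fsub: "F \<subseteq> {\<alpha>0..\<beta>0}" by (auto simp: F_def)
  have Fp: "emeasure lebesgue F > 0" using Fpos by (simp add: F_def)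
  have a0b0: "\<alpha>0 \<le> \<beta>0"
  proof (rule ccontr)
    assume "\<not> \<alpha>0 \<le> \<beta>0" then have "F = {}" using Fsub by auto
    then show False using Fp by simp
  qed
  have consf: "cons p v1 a b \<alpha>0 \<beta>0"
    by unfold_locales (use p wabs a_mono b_mono a_cont b_cont a0 ainf ab Vpos a0pos a0b0 in auto)
  interpret C: cons p v1 a b \<alpha>0 \<beta>0 by (rule consf)
  obtain x0 where x0: "x0 \<in> {\<alpha>0..\<beta>0}" "\<And>y. y \<in> {\<alpha>0..\<beta>0} \<Longrightarrow> C.V x0 \<le> C.V y"
    using continuous_attains_inf[OF compact_Icc _ C.V_cont] a0b0 by auto
  define Vmin where "Vmin = C.V x0"
  have Vmin: "0 < Vmin" using Vpos x0 a0pos by (simp add: Vmin_def)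
  have Wtot_pos: "0 < C.Wtot"
  proof -
    have "a \<alpha>0 \<le> \<alpha>0" using ab a0pos by (simp add: less_imp_le)
    then have "C.V \<alpha>0 \<le> C.Wtot" using C.V_le a0b0 by auto
    then show ?thesis using Vpos[OF a0pos] by simp
  qed
  have q: "0 < C.q" by (rule C.q_pos)
  show ?thesis
    unfolding JW_def infinity_ennreal_def
  proof (rule ennreal_SUP_eq_top)
    fix n :: nat
    define R where "R = real n + 1"
    have R: "0 < R" by (simp add: R_def)
    define K where "K = \<delta> * Vmin / (2 * C.Wtot * R)"
    have K: "0 < K" using d0 Vmin Wtot_pos R by (simp add: K_def)
    define \<epsilon> where "\<epsilon> = K powr C.q"
    have eps: "0 < \<epsilon>" using K by (simp add: \<epsilon>_def)
    have epsq: "\<epsilon> powr (1 / C.q) = K" using K q by (simp add: \<epsilon>_def powr_powr)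
    have "uniformly_continuous_on {C.s0..C.S} C.\<Omega>"
      using C.Om_cont by (rule compact_uniformly_continuous) simp
    then obtain \<eta>1 where e1: "\<eta>1 > 0"
      and uc1: "\<And>u v. u \<in> {C.s0..C.S} \<Longrightarrow> v \<in> {C.s0..C.S} \<Longrightarrow> dist v u < \<eta>1 \<Longrightarrow> dist (C.\<Omega> v) (C.\<Omega> u) < \<epsilon>/2"
      unfolding uniformly_continuous_on_def using eps by (metis half_gt_zero)
    have "continuous_on {\<alpha>0..\<beta>0} a" by (rule continuous_on_subset[OF a_cont]) (use a0pos in auto)
    then have "uniformly_continuous_on {\<alpha>0..\<beta>0} a" by (rule compact_uniformly_continuous) simp
    then obtain \<eta>2 where e2: "\<eta>2 > 0"
      and uc2: "\<And>u v. u \<in> {\<alpha>0..\<beta>0} \<Longrightarrow> v \<in> {\<alpha>0..\<beta>0} \<Longrightarrow> dist v u < \<eta>2 \<Longrightarrow> dist (a v) (a u) < \<eta>1"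
      unfolding uniformly_continuous_on_def using e1 by metis
    obtain \<alpha> \<beta> where ab0: "\<alpha>0 \<le> \<alpha>" "\<alpha> \<le> \<beta>" "\<beta> \<le> \<beta>0" and len: "\<beta> - \<alpha> < min \<eta>1 \<eta>2"
      and Ep: "emeasure lebesgue (F \<inter> {\<alpha>..\<beta>}) > 0"
      using small_interval[OF Fm Fsub Fp, of "min \<eta>1 \<eta>2"] e1 e2 by auto
    have Em: "F \<inter> {\<alpha>..\<beta>} \<in> sets lebesgue" by (rule sets.Int[OF Fm]) simp
    have Esb: "F \<inter> {\<alpha>..\<beta>} \<subseteq> {\<alpha>..\<beta>}" by auto
    note ts = three_split[OF Em Esb Ep]
    obtain E1 E2 E3 where Es: "E1 \<in> sets lebesgue" "E2 \<in> sets lebesgue" "E3 \<in> sets lebesgue"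
      and Esub: "E1 \<subseteq> F \<inter> {\<alpha>..\<beta>}" "E2 \<subseteq> F \<inter> {\<alpha>..\<beta>}" "E3 \<subseteq> F \<inter> {\<alpha>..\<beta>}"
      and disj: "E1 \<inter> E2 = {}" "E1 \<inter> E3 = {}" "E2 \<inter> E3 = {}"
      and mp: "measure lebesgue E1 > 0" "measure lebesgue E2 > 0" "measure lebesgue E3 > 0"
      using ts by blast
    obtain c1 c2 c3 where cnz: "c1 \<noteq> 0 \<or> c2 \<noteq> 0 \<or> c3 \<noteq> 0"
      and con1: "c1 * measure lebesgue E1 + c2 * measure lebesgue E2 + c3 * measure lebesgue E3 = 0"
      and con2: "c1 * (LINT x|lebesgue. indicator E1 x * C.\<Omega> (a x)) + c2 * (LINT x|lebesgue. indicator E2 x * C.\<Omega> (a x))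
              + c3 * (LINT x|lebesgue. indicator E3 x * C.\<Omega> (a x)) = 0"
      using lin2[of "measure lebesgue E1" "measure lebesgue E2" "measure lebesgue E3"
          "LINT x|lebesgue. indicator E1 x * C.\<Omega> (a x)" "LINT x|lebesgue. indicator E2 x * C.\<Omega> (a x)"
          "LINT x|lebesgue. indicator E3 x * C.\<Omega> (a x)"] mp by auto
    interpret D: cons2 p v1 a b \<alpha>0 \<beta>0 \<alpha> \<beta> E1 E2 E3 c1 c2 c3
    proof (intro cons2.intro[OF consf] cons2_axioms.intro)
      show "\<alpha>0 \<le> \<alpha>" "\<alpha> \<le> \<beta>" "\<beta> \<le> \<beta>0" by (rule ab0)+
      show "E1 \<in> sets lebesgue" "E2 \<in> sets lebesgue" "E3 \<in> sets lebesgue" by (rule Es)+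
      show "E1 \<subseteq> {\<alpha>..\<beta>}" "E2 \<subseteq> {\<alpha>..\<beta>}" "E3 \<subseteq> {\<alpha>..\<beta>}" using Esub by blast+
      show "E1 \<inter> E2 = {}" "E1 \<inter> E3 = {}" "E2 \<inter> E3 = {}" by (rule disj)+
      show "c1 * measure lebesgue E1 + c2 * measure lebesgue E2 + c3 * measure lebesgue E3 = 0" by (rule con1)
      show "c1 * (LINT x|lebesgue. indicator E1 x * C.\<Omega> (a x)) + c2 * (LINT x|lebesgue. indicator E2 x * C.\<Omega> (a x))
              + c3 * (LINT x|lebesgue. indicator E3 x * C.\<Omega> (a x)) = 0" by (rule con2)
    qed
    show "\<exists>g\<in>{g \<in> Wspace p v1 a b. \<not> (AE x in lebesgue_on {0<..}. g x = 0)}.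
            of_nat n \<le> (\<integral>\<^sup>+ x\<in>{0<..}. ennreal \<bar>f x * g x\<bar> \<partial>lebesgue) / Wnorm p v1 a b g"
    proof (rule bexI)
      have aa: "a \<alpha>0 \<le> a \<alpha>" "a \<alpha> \<le> a \<beta>" using C.a_le ab0 a0pos by auto
      have aal: "a \<alpha>0 \<le> \<alpha>0" using ab a0pos by (simp add: less_imp_le)
      have ab_le: "a \<beta> \<le> \<beta>" using ab[of \<beta>] ab0 a0pos by simp
      have r1: "a \<alpha> \<in> {C.s0..C.S}" "a \<beta> \<in> {C.s0..C.S}"
        using aa C.s0_le ab_le ab0 C.b0_S by auto
      have r2: "\<alpha> \<in> {C.s0..C.S}" "\<beta> \<in> {C.s0..C.S}"
        using aal C.s0_le ab0 C.b0_S by auto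
      have d2: "dist (a \<beta>) (a \<alpha>) < \<eta>1" using uc2[of \<alpha> \<beta>] ab0 len by (auto simp: dist_real_def)
      have e1: "integral {a \<alpha>..a \<beta>} C.w = C.\<Omega> (a \<beta>) - C.\<Omega> (a \<alpha>)"
        using C.Om_diff[of "a \<alpha>" "a \<beta>"] r1 aa by auto
      have "\<bar>C.\<Omega> (a \<beta>) - C.\<Omega> (a \<alpha>)\<bar> < \<epsilon>/2" using uc1[OF r1(1) r1(2) d2] by (simp add: dist_real_def)
      then have i1: "integral {a \<alpha>..a \<beta>} C.w < \<epsilon>/2" unfolding e1
        using abs_ge_self[of "C.\<Omega> (a \<beta>) - C.\<Omega> (a \<alpha>)"] by linarith
      have e2: "integral {\<alpha>..\<beta>} C.w = C.\<Omega> \<beta> - C.\<Omega> \<alpha>"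
        using C.Om_diff[of \<alpha> \<beta>] r2 ab0 by auto
      have d3: "dist \<beta> \<alpha> < \<eta>1" using len ab0 by (simp add: dist_real_def)
      have "\<bar>C.\<Omega> \<beta> - C.\<Omega> \<alpha>\<bar> < \<epsilon>/2" using uc1[OF r2(1) r2(2) d3] by (simp add: dist_real_def)
      then have i2: "integral {\<alpha>..\<beta>} C.w < \<epsilon>/2" unfolding e2
        using abs_ge_self[of "C.\<Omega> \<beta> - C.\<Omega> \<alpha>"] by linarith
      have IB: "D.IB \<le> \<epsilon>" using i1 i2 by (simp add: D.IB_def)
      have IBq: "D.IB powr (1 / C.q) \<le> K"
      proof -
        have "D.IB powr (1 / C.q) \<le> \<epsilon> powr (1 / C.q)"
          using IB D.IB_nonneg q by (intro powr_mono2) auto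
        then show ?thesis using epsq by simp
      qed
      have Hs: "0 < D.Hsum"
      proof -
        have t: "0 \<le> \<bar>c1\<bar> * measure lebesgue E1" "0 \<le> \<bar>c2\<bar> * measure lebesgue E2" "0 \<le> \<bar>c3\<bar> * measure lebesgue E3"
          by (simp_all add: measure_nonneg)
        have "0 < \<bar>c1\<bar> * measure lebesgue E1 \<or> 0 < \<bar>c2\<bar> * measure lebesgue E2 \<or> 0 < \<bar>c3\<bar> * measure lebesgue E3"
          using cnz mp by auto
        then have "\<bar>c1\<bar> * measure lebesgue E1 + \<bar>c2\<bar> * measure lebesgue E2 + \<bar>c3\<bar> * measure lebesgue E3 > 0"
          using t by linarith
        then show ?thesis by (simp add: D.Hsum_def)
      qed
      have Wn: "Wnorm p v1 a b D.g \<le> ennreal (2 * C.Wtot * D.Hsum * K)"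
      proof -
        have "2 * (C.Wtot * D.Hsum * D.IB powr (1 / C.q)) \<le> 2 * C.Wtot * D.Hsum * K"
          using IBq Wtot_pos Hs by (simp add: mult_left_mono)
        then show ?thesis using D.Wnorm_bound order_trans ennreal_leI by blast
      qed
      have Xl: "ennreal (\<delta> * Vmin * D.Hsum) \<le> (\<integral>\<^sup>+ x\<in>{0<..}. ennreal \<bar>f x * D.g x\<bar> \<partial>lebesgue)"
      proof (rule D.lower_bound)
        show "0 \<le> \<delta>" "0 \<le> Vmin" using d0 Vmin by auto
        fix x show "x \<in> D.E \<Longrightarrow> \<delta> \<le> \<bar>f x\<bar>" using Esub by (auto simp: D.E_def F_def)
        show "x \<in> {\<alpha>0..\<beta>0} \<Longrightarrow> Vmin \<le> C.V x" using x0 by (simp add: Vmin_def)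
      qed
      have RR: "\<delta> * Vmin * D.Hsum / (2 * C.Wtot * D.Hsum * K) = R"
        using Hs Wtot_pos R d0 Vmin by (simp add: K_def field_simps)
      have "ennreal R \<le> (\<integral>\<^sup>+ x\<in>{0<..}. ennreal \<bar>f x * D.g x\<bar> \<partial>lebesgue) / Wnorm p v1 a b D.g"
        by (rule ratio_ge[OF Xl _ Wn _ RR]) (use d0 Vmin Hs Wtot_pos K in auto)
      moreover have "of_nat n \<le> ennreal R" by (simp add: R_def ennreal_of_nat_eq_real_of_nat)
      ultimately show "of_nat n \<le> (\<integral>\<^sup>+ x\<in>{0<..}. ennreal \<bar>f x * D.g x\<bar> \<partial>lebesgue) / Wnorm p v1 a b D.g"
        by (rule order_trans[rotated])
      have "Wnorm p v1 a b D.g < \<infinity>" using Wn by (simp add: le_less_trans)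
      moreover have "\<not> (AE x in lebesgue_on {0<..}. D.g x = 0)"
        by (rule D.g_nonzero) (use cnz mp in auto)
      ultimately show "D.g \<in> {g \<in> Wspace p v1 a b. \<not> (AE x in lebesgue_on {0<..}. g x = 0)}"
        using D.g_Lloc by (simp add: Wspace_def)
    qed
  qed
qed

lemma JW_zero:
  assumes "AE x in lebesgue_on {0<..}. h x = 0"
  shows "JW p v1 a b h = 0"
proof -
  have ae: "AE x in lebesgue. x \<in> {0<..} \<longrightarrow> h x = 0"
    using assms by (subst (asm) AE_restrict_space_iff) auto
  have z: "\<And>g. (\<integral>\<^sup>+ x\<in>{0<..}. ennreal \<bar>h x * g x\<bar> \<partial>lebesgue) = 0"
  proof -
    fix g :: "real \<Rightarrow> real"
    have "(\<integral>\<^sup>+ x\<in>{0<..}. ennreal \<bar>h x * g x\<bar> \<partial>lebesgue) = (\<integral>\<^sup>+ x. ennreal (\<bar>h x * g x\<bar> * indicator {0<..} x) \<partial>lebesgue)"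
      by (rule nn_integral_set_ennreal)
    also have "\<dots> = 0"
      by (subst nn_integral_cong_AE[where v="\<lambda>x. 0"]) (use ae in \<open>auto simp: indicator_def\<close>)
    finally show "(\<integral>\<^sup>+ x\<in>{0<..}. ennreal \<bar>h x * g x\<bar> \<partial>lebesgue) = 0" .
  qed
  show ?thesis unfolding JW_def z by (simp add: SUP_constant bot_ennreal)
qed

lemma nz_measure:
  fixes h :: "real \<Rightarrow> real"
  assumes m: "h \<in> borel_measurable (lebesgue_on {0<..})"
    and n: "\<not> (AE x in lebesgue_on {0<..}. h x = 0)"
  shows "emeasure lebesgue {x \<in> {0<..}. h x \<noteq> 0} > 0"
proof (rule ccontr)
  assume "\<not> ?thesis"
  then have z: "emeasure lebesgue {x \<in> {0<..}. h x \<noteq> 0} = 0" by (simp add: not_gr_zero)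
  have "{x \<in> space (lebesgue_on {0<..}). h x = 0} \<in> sets (lebesgue_on {0<..})"
    using m by (intro borel_measurable_eq) auto
  then have "space (lebesgue_on {0<..}) - {x \<in> space (lebesgue_on {0<..}). h x = 0} \<in> sets (lebesgue_on {0<..})"
    by (intro sets.compl_sets)
  moreover have "space (lebesgue_on {0<..}) - {x \<in> space (lebesgue_on {0<..}). h x = 0} = {x \<in> {0<..}. h x \<noteq> 0}"
    by auto
  ultimately have s: "{x \<in> {0<..}. h x \<noteq> 0} \<in> sets lebesgue"
    by (simp add: sets_restrict_space_iff)
  have "AE x in lebesgue. x \<in> {0<..} \<longrightarrow> h x = 0"
    by (rule AE_I[OF _ z s]) auto
  then have "AE x in lebesgue_on {0<..}. h x = 0"
    by (subst AE_restrict_space_iff) auto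
  then show False using n by simp
qed

theorem corollary2p9:
  fixes p :: real and v0 v1 a b f :: "real \<Rightarrow> real" and c :: real
  assumes p: "1 < p"
    and v0: "weight_class p v0" and v1: "weight_class p v1"
    and v1_pos: "AE x in lebesgue_on {0<..}. 0 < v1 x"
    and inv_v1: "Lloc (conj_exp p) (\<lambda>x. 1 / v1 x)"
    and c: "0 < c"
    and c0: "Lnorm (conj_exp p) {0<..<c} (\<lambda>x. 1 / v1 x) * Lnorm p {0<..<c} v0 = \<infinity>"
    and c1: "Lnorm (conj_exp p) {c<..} (\<lambda>x. 1 / v1 x) * Lnorm p {c<..} v0 = \<infinity>"
    and a_mono: "strict_mono_on {0<..} a" and b_mono: "strict_mono_on {0<..} b"
    and a_ac: "loc_abs_cont_pos a" and b_ac: "loc_abs_cont_pos b"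
    and a0: "(a \<longlongrightarrow> 0) (at_right 0)" and b0: "(b \<longlongrightarrow> 0) (at_right 0)"
    and ainf: "filterlim a at_top at_top" and binf: "filterlim b at_top at_top"
    and ab: "\<And>t. 0 < t \<Longrightarrow> a t < t \<and> t < b t"
    and bal: "\<And>t. 0 < t \<Longrightarrow>
       (LINT x:{a t..t}|lebesgue. wt p v1 x) = (LINT x:{t..b t}|lebesgue. wt p v1 x)"
    and norm1: "\<And>t. 0 < t \<Longrightarrow>
       (LINT x:{a t..b t}|lebesgue. wt p v1 x) powr (1 / conj_exp p) *
       (LINT x:{a t..b t}|lebesgue. v0 x powr p) powr (1 / p) = 1"
    and f_meas: "f \<in> borel_measurable (lebesgue_on {0<..})"
    and f_nz: "emeasure lebesgue {x \<in> {0<..}. f x \<noteq> 0} > 0"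
  shows "JW p v1 a b f = \<infinity> \<and>
    strong_assoc p v1 a b =
      {h \<in> borel_measurable (lebesgue_on {0<..}). AE x in lebesgue_on {0<..}. h x = 0}"
proof -
  have wabs: "\<And>u v. 0 < u \<Longrightarrow> wt p v1 absolutely_integrable_on {u..v}"
    using wt_absint[OF v1 inv_v1] by blast
  have a_cont: "continuous_on {0<..} a" by (rule lac_cont[OF a_ac])
  have b_cont: "continuous_on {0<..} b" by (rule lac_cont[OF b_ac])
  have Vpos: "\<And>t. 0 < t \<Longrightarrow> 0 < V1 p v1 a b t"
  proof -
    fix t :: real assume t: "0 < t"
    have nn: "0 \<le> V1 p v1 a b t" unfolding V1_def set_lebesgue_integral_def
      by (rule Bochner_Integration.integral_nonneg) (simp add: wt_nonneg)
    have "V1 p v1 a b t \<noteq> 0"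
    proof
      assume "V1 p v1 a b t = 0"
      then have "(LINT x:{a t..b t}|lebesgue. wt p v1 x) = 0" by (simp add: V1_def)
      then show False using norm1[OF t] by simp
    qed
    then show "0 < V1 p v1 a b t" using nn by simp
  qed
  have JWT: "JW p v1 a b g = \<infinity>" if g1: "g \<in> borel_measurable (lebesgue_on {0<..})"
    and g2: "emeasure lebesgue {x \<in> {0<..}. g x \<noteq> 0} > 0" for g
    by (rule JW_top[OF p _ a_mono b_mono a_cont b_cont a0 ainf ab _ g1 g2]) (use wabs Vpos in auto)
  have SA: "strong_assoc p v1 a b =
      {h \<in> borel_measurable (lebesgue_on {0<..}). AE x in lebesgue_on {0<..}. h x = 0}"
  proof (rule set_eqI)
    fix h :: "real \<Rightarrow> real"
    show "h \<in> strong_assoc p v1 a b \<longleftrightarrow>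
      h \<in> {h \<in> borel_measurable (lebesgue_on {0<..}). AE x in lebesgue_on {0<..}. h x = 0}"
    proof
      assume "h \<in> strong_assoc p v1 a b"
      then have m: "h \<in> borel_measurable (lebesgue_on {0<..})" and fin: "JW p v1 a b h < \<infinity>"
        unfolding strong_assoc_def by auto
      have "AE x in lebesgue_on {0<..}. h x = 0"
      proof (rule ccontr)
        assume n: "\<not> (AE x in lebesgue_on {0<..}. h x = 0)"
        have "JW p v1 a b h = \<infinity>" by (rule JWT[OF m nz_measure[OF m n]])
        then show False using fin by simp
      qed
      then show "h \<in> {h \<in> borel_measurable (lebesgue_on {0<..}). AE x in lebesgue_on {0<..}. h x = 0}"
        using m by simp
    next
      assume "h \<in> {h \<in> borel_measurable (lebesgue_on {0<..}). AE x in lebesgue_on {0<..}. h x = 0}"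
      then have m: "h \<in> borel_measurable (lebesgue_on {0<..})" and ae: "AE x in lebesgue_on {0<..}. h x = 0"
        by auto
      have "JW p v1 a b h = 0" by (rule JW_zero[OF ae])
      then show "h \<in> strong_assoc p v1 a b" using m unfolding strong_assoc_def by simp
    qed
  qed
  show ?thesis using JWT[OF f_meas f_nz] SA by simp
qed

end
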